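(* Let $\mathfrak{g}$ be a finite-dimensional non-abelian nilpotent complex Lie algebra. Then there is a submultiplicative prenorm on the universal enveloping algebra $U(\mathfrak{g})$ such that the corresponding completion is not a PI-algebra.
   Context: A submultiplicative prenorm on $U(\mathfrak{g})$ is a seminorm $p$ with $p(ab)\le p(a)p(b)$; the completion is the Banach algebra obtained by completing $U(\mathfrak{g})/\{a:p(a)=0\}$. An associative algebra is a PI-algebra if there is a nonzero non-commutative polynomial $p$ in finitely many variables with $p(a_1,\ldots,a_n)=0$ for all elements $a_i$ of the algebra. *)

theory Defs
  imports Complex_Main
begin

text \<open>A complex Lie algebra of dimension n is given by its structure constants
  c i j k (i,j,k < n) w.r.t. a basis e_0..e_(n-1):  [e_i,e_j] = sum_k c i j k e_k.
  Vectors are functions nat => complex (only coordinates < n matter).\<close>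

definition lie_br :: "(nat \<Rightarrow> nat \<Rightarrow> nat \<Rightarrow> complex) \<Rightarrow> nat \<Rightarrow>
    (nat \<Rightarrow> complex) \<Rightarrow> (nat \<Rightarrow> complex) \<Rightarrow> (nat \<Rightarrow> complex)" where
  "lie_br c n u v = (\<lambda>k. if k < n then (\<Sum>i<n. \<Sum>j<n. u i * v j * c i j k) else 0)"

definition is_lie_algebra :: "(nat \<Rightarrow> nat \<Rightarrow> nat \<Rightarrow> complex) \<Rightarrow> nat \<Rightarrow> bool" where
  "is_lie_algebra c n \<longleftrightarrow>
     (\<forall>u. lie_br c n u u = (\<lambda>_. 0)) \<and>
     (\<forall>u v w. (\<lambda>k. lie_br c n u (lie_br c n v w) k + lie_br c n v (lie_br c n w u) k
                   + lie_br c n w (lie_br c n u v) k) = (\<lambda>_. 0))"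

text \<open>Nested brackets [v1,[v2,...,[vm,x]...]]; these span the lower central series term g^(m+1).\<close>
fun nest_br :: "(nat \<Rightarrow> nat \<Rightarrow> nat \<Rightarrow> complex) \<Rightarrow> nat \<Rightarrow> (nat \<Rightarrow> complex) \<Rightarrow>
    (nat \<Rightarrow> complex) list \<Rightarrow> (nat \<Rightarrow> complex)" where
  "nest_br c n x [] = x"
| "nest_br c n x (v # vs) = lie_br c n v (nest_br c n x vs)"

definition lie_nilpotent :: "(nat \<Rightarrow> nat \<Rightarrow> nat \<Rightarrow> complex) \<Rightarrow> nat \<Rightarrow> bool" where
  "lie_nilpotent c n \<longleftrightarrow>
     (\<exists>m. \<forall>x us. length us = Suc m \<longrightarrow> nest_br c n x us = (\<lambda>_. 0))"

definition lie_abelian :: "(nat \<Rightarrow> nat \<Rightarrow> nat \<Rightarrow> complex) \<Rightarrow> nat \<Rightarrow> bool" where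
  "lie_abelian c n \<longleftrightarrow> (\<forall>u v. lie_br c n u v = (\<lambda>_. 0))"

text \<open>Elements of the free associative C-algebra on generators indexed by nat are finitely
  supported functions from words (nat list) to complex.\<close>

type_synonym fa = "nat list \<Rightarrow> complex"

definition FA :: "nat \<Rightarrow> fa set" where
  "FA n = {a. finite {w. a w \<noteq> 0} \<and> (\<forall>w. a w \<noteq> 0 \<longrightarrow> set w \<subseteq> {..<n})}"

definition fa_add :: "fa \<Rightarrow> fa \<Rightarrow> fa" where
  "fa_add a b = (\<lambda>w. a w + b w)"

definition fa_diff :: "fa \<Rightarrow> fa \<Rightarrow> fa" where
  "fa_diff a b = (\<lambda>w. a w - b w)"

definition fa_scale :: "complex \<Rightarrow> fa \<Rightarrow> fa" where
  "fa_scale z a = (\<lambda>w. z * a w)"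

definition fa_mult :: "fa \<Rightarrow> fa \<Rightarrow> fa" where
  "fa_mult a b = (\<lambda>w. \<Sum>i\<le>length w. a (take i w) * b (drop i w))"

definition fa_one :: fa where
  "fa_one = (\<lambda>w. if w = [] then 1 else 0)"

definition fa_gen :: "nat \<Rightarrow> fa" where
  "fa_gen i = (\<lambda>w. if w = [i] then 1 else 0)"

definition ue_rel :: "(nat \<Rightarrow> nat \<Rightarrow> nat \<Rightarrow> complex) \<Rightarrow> nat \<Rightarrow> nat \<Rightarrow> nat \<Rightarrow> fa" where
  "ue_rel c n i j = fa_diff (fa_diff (fa_mult (fa_gen i) (fa_gen j)) (fa_mult (fa_gen j) (fa_gen i)))
                      (\<lambda>w. \<Sum>k<n. c i j k * fa_gen k w)"

text \<open>Two-sided ideal of the free algebra FA n generated by the relations; U(g) = FA n / ue_ideal.\<close>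
inductive_set ue_ideal :: "(nat \<Rightarrow> nat \<Rightarrow> nat \<Rightarrow> complex) \<Rightarrow> nat \<Rightarrow> fa set"
  for c :: "nat \<Rightarrow> nat \<Rightarrow> nat \<Rightarrow> complex" and n :: nat where
  rel: "i < n \<Longrightarrow> j < n \<Longrightarrow> ue_rel c n i j \<in> ue_ideal c n"
| zero: "(\<lambda>_. 0) \<in> ue_ideal c n"
| add: "a \<in> ue_ideal c n \<Longrightarrow> b \<in> ue_ideal c n \<Longrightarrow> fa_add a b \<in> ue_ideal c n"
| mult_left: "a \<in> FA n \<Longrightarrow> b \<in> ue_ideal c n \<Longrightarrow> fa_mult a b \<in> ue_ideal c n"
| mult_right: "a \<in> FA n \<Longrightarrow> b \<in> ue_ideal c n \<Longrightarrow> fa_mult b a \<in> ue_ideal c n"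

text \<open>A submultiplicative prenorm on U(g), pulled back to FA n: a seminorm on FA n which is
  constant on cosets of the ideal (i.e. well-defined on the quotient U(g)) and submultiplicative.\<close>
definition ue_prenorm :: "(nat \<Rightarrow> nat \<Rightarrow> nat \<Rightarrow> complex) \<Rightarrow> nat \<Rightarrow> (fa \<Rightarrow> real) \<Rightarrow> bool" where
  "ue_prenorm c n p \<longleftrightarrow>
     (\<forall>a\<in>FA n. \<forall>b\<in>FA n. fa_diff a b \<in> ue_ideal c n \<longrightarrow> p a = p b) \<and>
     (\<forall>a\<in>FA n. \<forall>b\<in>FA n. p (fa_add a b) \<le> p a + p b) \<and>
     (\<forall>a\<in>FA n. \<forall>z. p (fa_scale z a) = cmod z * p a) \<and>
     (\<forall>a\<in>FA n. \<forall>b\<in>FA n. p (fa_mult a b) \<le> p a * p b)"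

text \<open>The completion of U(g)/ker p consists of classes of p-Cauchy sequences modulo p-null
  sequences, with pointwise operations.\<close>
definition p_cauchy :: "nat \<Rightarrow> (fa \<Rightarrow> real) \<Rightarrow> (nat \<Rightarrow> fa) \<Rightarrow> bool" where
  "p_cauchy n p s \<longleftrightarrow> (\<forall>k. s k \<in> FA n) \<and>
     (\<forall>e>0. \<exists>N. \<forall>k\<ge>N. \<forall>l\<ge>N. p (fa_diff (s k) (s l)) < e)"

text \<open>Non-commutative polynomials in variables nat are elements of the free algebra
  (finitely supported functions on words); evaluation in FA.\<close>
fun fa_prod :: "fa list \<Rightarrow> fa" where
  "fa_prod [] = fa_one"
| "fa_prod (x # xs) = fa_mult x (fa_prod xs)"

definition nc_eval :: "fa \<Rightarrow> (nat \<Rightarrow> fa) \<Rightarrow> fa" where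
  "nc_eval P x = (\<lambda>w. \<Sum>v\<in>{v. P v \<noteq> 0}. P v * fa_prod (map x v) w)"

text \<open>The completion is a PI-algebra: there is a nonzero nc polynomial P such that
  P(x_1,...,x_m) = 0 for all elements of the completion, i.e. evaluating P pointwise on
  Cauchy sequences gives a null sequence.\<close>
definition completion_PI :: "nat \<Rightarrow> (fa \<Rightarrow> real) \<Rightarrow> bool" where
  "completion_PI n p \<longleftrightarrow>
     (\<exists>P. finite {v. P v \<noteq> 0} \<and> P \<noteq> (\<lambda>_. 0) \<and>
        (\<forall>s :: nat \<Rightarrow> nat \<Rightarrow> fa. (\<forall>i. p_cauchy n p (s i)) \<longrightarrow>
            ((\<lambda>k. p (nc_eval P (\<lambda>i. s i k))) \<longlonglongrightarrow> 0)))"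

end

theory Submission
  imports Defs
begin


type_synonym mono = "nat \<Rightarrow> nat"
type_synonym vec = "mono \<Rightarrow> complex"

definition vmul :: "nat \<Rightarrow> vec \<Rightarrow> vec" where
  "vmul k \<phi> = (\<lambda>M. if M k = 0 then 0 else \<phi> (M(k := M k - 1)))"

definition vder :: "nat \<Rightarrow> vec \<Rightarrow> vec" where
  "vder k \<phi> = (\<lambda>M. of_nat (Suc (M k)) * \<phi> (M(k := Suc (M k))))"

lemma vder_vmul_same: "vder k (vmul k \<phi>) = (\<lambda>M. vmul k (vder k \<phi>) M + \<phi> M)"
proof
  fix M
  show "vder k (vmul k \<phi>) M = vmul k (vder k \<phi>) M + \<phi> M"
  proof (cases "M k = 0")
    case True
    then show ?thesis by (simp add: vder_def vmul_def)
  next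
    case False
    then have "of_nat (Suc (M k - 1)) = (of_nat (M k) :: complex)" by simp
    moreover have "M(k := M k - 1, k := Suc (M k - 1)) = M" using False by auto
    ultimately show ?thesis using False by (simp add: vder_def vmul_def algebra_simps)
  qed
qed

lemma vder_vmul_diff: "k \<noteq> k' \<Longrightarrow> vder k (vmul k' \<phi>) = vmul k' (vder k \<phi>)"
  by (rule ext) (simp add: vder_def vmul_def fun_upd_twist)

lemma vmul_comm: "vmul k (vmul k' \<phi>) = vmul k' (vmul k \<phi>)"
  by (rule ext) (cases "k = k'"; simp add: vmul_def fun_upd_twist)

lemma vder_comm: "vder k (vder k' \<phi>) = vder k' (vder k \<phi>)"
  by (rule ext) (cases "k = k'"; simp add: vder_def fun_upd_twist)

lemma vder_add: "vder l (\<lambda>M. f M + g M) = (\<lambda>M. vder l f M + vder l g M)"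
  by (rule ext) (simp add: vder_def algebra_simps)
lemma vder_diff: "vder l (\<lambda>M. f M - g M) = (\<lambda>M. vder l f M - vder l g M)"
  by (rule ext) (simp add: vder_def algebra_simps)
lemma vder_scale: "vder l (\<lambda>M. c * f M) = (\<lambda>M. c * vder l f M)"
  by (rule ext) (simp add: vder_def algebra_simps)
lemma vder_sum: "vder l (\<lambda>M. \<Sum>k\<in>K. g k M) = (\<lambda>M. \<Sum>k\<in>K. vder l (g k) M)"
  by (rule ext) (simp add: vder_def sum_distrib_left)
lemma vder_zero: "vder l (\<lambda>M. 0) = (\<lambda>M. 0)"
  by (rule ext) (simp add: vder_def)

lemma vmul_add: "vmul l (\<lambda>M. f M + g M) = (\<lambda>M. vmul l f M + vmul l g M)"
  by (rule ext) (simp add: vmul_def)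
lemma vmul_diff: "vmul l (\<lambda>M. f M - g M) = (\<lambda>M. vmul l f M - vmul l g M)"
  by (rule ext) (simp add: vmul_def)
lemma vmul_scale: "vmul l (\<lambda>M. c * f M) = (\<lambda>M. c * vmul l f M)"
  by (rule ext) (simp add: vmul_def)
lemma vmul_sum: "vmul l (\<lambda>M. \<Sum>k\<in>K. g k M) = (\<lambda>M. \<Sum>k\<in>K. vmul l (g k) M)"
  by (rule ext) (simp add: vmul_def)
lemma vmul_zero: "vmul l (\<lambda>M. 0) = (\<lambda>M. 0)"
  by (rule ext) (simp add: vmul_def)

lemmas vlin = vder_add vder_diff vder_scale vder_sum vder_zero vmul_add vmul_diff vmul_scale vmul_sum vmul_zero

definition op :: "nat \<Rightarrow> (nat \<Rightarrow> complex) \<Rightarrow> (nat \<Rightarrow> complex) \<Rightarrow> complex \<Rightarrow> vec \<Rightarrow> vec" where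
  "op n p q c \<phi> = (\<lambda>M. (\<Sum>k\<le>n. p k * vmul (Suc n) (vder k \<phi>) M)
      + (\<Sum>k\<le>n. q k * vmul k \<phi> M) + c * vmul (Suc n) \<phi> M)"

lemma op_add: "op n p q c (\<lambda>M. f M + g M) = (\<lambda>M. op n p q c f M + op n p q c g M)"
  by (rule ext) (simp add: op_def vlin algebra_simps sum.distrib)
lemma op_diff: "op n p q c (\<lambda>M. f M - g M) = (\<lambda>M. op n p q c f M - op n p q c g M)"
  by (rule ext) (simp add: op_def vlin algebra_simps sum_subtractf)
lemma op_scale: "op n p q c (\<lambda>M. d * f M) = (\<lambda>M. d * op n p q c f M)"
  by (rule ext) (simp add: op_def vlin algebra_simps sum_distrib_left)
lemma op_sum: "op n p q c (\<lambda>M. \<Sum>k\<in>K. g k M) = (\<lambda>M. \<Sum>k\<in>K. op n p q c (g k) M)"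
  by (rule ext) (simp add: op_def vlin algebra_simps sum_distrib_left sum.distrib sum.swap[of _ K])
lemma op_zero: "op n p q c (\<lambda>M. 0) = (\<lambda>M. 0)"
  by (rule ext) (simp add: op_def vlin)


lemma vder_op: "l \<le> n \<Longrightarrow> vder l (op n p q c \<phi>) = (\<lambda>M. op n p q c (vder l \<phi>) M + q l * \<phi> M)"
proof -
  assume l: "l \<le> n"
  have 1: "\<And>k. vder l (vmul (Suc n) (vder k \<phi>)) = vmul (Suc n) (vder k (vder l \<phi>))"
    using l by (simp add: vder_vmul_diff vder_comm)
  have 2: "\<And>k. vder l (vmul k \<phi>) = (\<lambda>M. vmul k (vder l \<phi>) M + (if k = l then \<phi> M else 0))"
    by (rule ext) (simp add: vder_vmul_same vder_vmul_diff)
  have 3: "vder l (vmul (Suc n) \<phi>) = vmul (Suc n) (vder l \<phi>)" using l by (simp add: vder_vmul_diff)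
  show ?thesis
    apply (rule ext)
    apply (simp only: op_def vlin 1 3)
    apply (simp add: 2 distrib_left sum.distrib l)
    apply (simp add: if_distrib[of "\<lambda>x. q _ * x"] sum.delta l cong: if_cong)
    done
qed


lemma vmul_op: "m \<le> n \<Longrightarrow> vmul m (op n p q c \<phi>) = (\<lambda>M. op n p q c (vmul m \<phi>) M - p m * vmul (Suc n) \<phi> M)"
proof -
  assume m: "m \<le> n"
  have 1: "\<And>k. vmul m (vmul (Suc n) (vder k \<phi>)) = vmul (Suc n) (\<lambda>M. vder k (vmul m \<phi>) M - (if k = m then \<phi> M else 0))"
  proof -
    fix k
    have "vmul m (vder k \<phi>) = (\<lambda>M. vder k (vmul m \<phi>) M - (if k = m then \<phi> M else 0))"
      by (rule ext) (cases "k = m"; simp add: vder_vmul_same vder_vmul_diff)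
    then show "vmul m (vmul (Suc n) (vder k \<phi>)) = vmul (Suc n) (\<lambda>M. vder k (vmul m \<phi>) M - (if k = m then \<phi> M else 0))"
      by (simp add: vmul_comm[of m "Suc n"])
  qed
  have 2: "\<And>k. vmul m (vmul k \<phi>) = vmul k (vmul m \<phi>)" by (simp add: vmul_comm)
  have 3: "vmul m (vmul (Suc n) \<phi>) = vmul (Suc n) (vmul m \<phi>)" by (simp add: vmul_comm)
  have 4: "\<And>k. vmul (Suc n) (\<lambda>M. if k = m then \<phi> M else 0) = (\<lambda>M. if k = m then vmul (Suc n) \<phi> M else 0)"
    by (rule ext) (simp add: vmul_def)
  show ?thesis
    apply (rule ext)
    apply (simp only: op_def vlin 1 3)
    apply (simp add: 2 4 vlin right_diff_distrib sum_subtractf m)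
    apply (simp add: if_distrib[of "\<lambda>x. p _ * x"] sum.delta m cong: if_cong)
    done
qed


lemma vmulS_op: "vmul (Suc n) (op n p q c \<phi>) = op n p q c (vmul (Suc n) \<phi>)"
proof -
  have 1: "\<And>k. k \<le> n \<Longrightarrow> vmul (Suc n) (vder k \<phi>) = vder k (vmul (Suc n) \<phi>)"
    by (simp add: vder_vmul_diff)
  have 2: "\<And>k. k \<le> n \<Longrightarrow> vmul (Suc n) (vmul k \<phi>) = vmul k (vmul (Suc n) \<phi>)"
    by (simp add: vmul_comm)
  show ?thesis
    apply (rule ext)
    apply (simp only: op_def vlin)
    apply simp
    apply (intro arg_cong2[where f="(+)"] sum.cong refl)
    apply (simp_all add: 1 2)
    done
qed


lemma op_comm: "op n p q c (op n p' q' c' \<phi>) =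
   (\<lambda>M. op n p' q' c' (op n p q c \<phi>) M + (\<Sum>k\<le>n. p k * q' k - p' k * q k) * vmul (Suc n) \<phi> M)"
proof -
  let ?o = "op n p' q' c'"
  have A: "\<And>k. k \<le> n \<Longrightarrow> vmul (Suc n) (vder k (?o \<phi>)) = (\<lambda>M. ?o (vmul (Suc n) (vder k \<phi>)) M + q' k * vmul (Suc n) \<phi> M)"
    by (simp add: vder_op vlin vmulS_op)
  have B: "\<And>k. k \<le> n \<Longrightarrow> vmul k (?o \<phi>) = (\<lambda>M. ?o (vmul k \<phi>) M - p' k * vmul (Suc n) \<phi> M)"
    by (simp add: vmul_op)
  have C: "vmul (Suc n) (?o \<phi>) = ?o (vmul (Suc n) \<phi>)" by (simp add: vmulS_op)
  have D: "?o (op n p q c \<phi>) = (\<lambda>M. (\<Sum>k\<le>n. p k * ?o (vmul (Suc n) (vder k \<phi>)) M)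
      + (\<Sum>k\<le>n. q k * ?o (vmul k \<phi>) M) + c * ?o (vmul (Suc n) \<phi>) M)"
    by (simp add: op_def[of n p q c] op_add op_scale op_sum)
  show ?thesis
  proof
    fix M
    have S1: "(\<Sum>k\<le>n. p k * vmul (Suc n) (vder k (?o \<phi>)) M) = (\<Sum>k\<le>n. p k * (?o (vmul (Suc n) (vder k \<phi>)) M + q' k * vmul (Suc n) \<phi> M))"
      by (rule sum.cong) (simp_all add: A)
    have S2: "(\<Sum>k\<le>n. q k * vmul k (?o \<phi>) M) = (\<Sum>k\<le>n. q k * (?o (vmul k \<phi>) M - p' k * vmul (Suc n) \<phi> M))"
      by (rule sum.cong) (simp_all add: B)
    show "op n p q c (?o \<phi>) M = ?o (op n p q c \<phi>) M + (\<Sum>k\<le>n. p k * q' k - p' k * q k) * vmul (Suc n) \<phi> M"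
      apply (subst op_def)
      apply (simp only: D C S1 S2)
      apply (simp add: algebra_simps sum.distrib sum_subtractf sum_distrib_right)
      apply (simp add: sum_distrib_left mult.assoc)
      apply (subst add.commute)
      apply (intro arg_cong2[where f="(+)"] sum.cong refl)
       apply (simp_all add: ac_simps)
      done
  qed
qed


definition supp :: "fa \<Rightarrow> nat list set" where "supp a = {w. a w \<noteq> 0}"

lemma FA_iff: "a \<in> FA n \<longleftrightarrow> finite (supp a) \<and> (\<forall>w. a w \<noteq> 0 \<longrightarrow> set w \<subseteq> {..<n})"
  by (simp add: FA_def supp_def)

lemma prod_rep:
  assumes "finite Sa" "finite Sb" "supp a \<subseteq> Sa" "supp b \<subseteq> Sb"
  shows "fa_mult a b w = (\<Sum>x\<in>{x\<in>Sa\<times>Sb. fst x @ snd x = w}. a (fst x) * b (snd x))"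
proof -
  let ?I = "{i. i \<le> length w \<and> take i w \<in> Sa \<and> drop i w \<in> Sb}"
  let ?T = "{x\<in>Sa\<times>Sb. fst x @ snd x = w}"
  have "fa_mult a b w = (\<Sum>i\<in>{..length w}. a (take i w) * b (drop i w))"
    by (simp add: fa_mult_def)
  also have "\<dots> = (\<Sum>i\<in>?I. a (take i w) * b (drop i w))"
  proof (rule sum.mono_neutral_right)
    show "\<forall>i\<in>{..length w} - ?I. a (take i w) * b (drop i w) = 0"
      using assms(3,4) by (auto simp: supp_def)
  qed auto
  also have "\<dots> = (\<Sum>x\<in>?T. a (fst x) * b (snd x))"
  proof (rule sum.reindex_bij_betw[where h="\<lambda>i. (take i w, drop i w)" and g="\<lambda>x. a (fst x) * b (snd x)", simplified])
    show "bij_betw (\<lambda>i. (take i w, drop i w)) ?I ?T"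
      unfolding bij_betw_def
    proof
      show "inj_on (\<lambda>i. (take i w, drop i w)) ?I"
      proof (rule inj_onI)
        fix i j assume "i \<in> ?I" "j \<in> ?I" "(take i w, drop i w) = (take j w, drop j w)"
        then show "i = j" by (metis (no_types, lifting) length_take mem_Collect_eq min.absorb2 prod.inject)
      qed
      show "(\<lambda>i. (take i w, drop i w)) ` ?I = ?T"
      proof
        show "(\<lambda>i. (take i w, drop i w)) ` ?I \<subseteq> ?T" by auto
        show "?T \<subseteq> (\<lambda>i. (take i w, drop i w)) ` ?I"
        proof
          fix x assume x: "x \<in> ?T"
          obtain u v where uv: "x = (u, v)" by (cases x)
          then have "u @ v = w" "u \<in> Sa" "v \<in> Sb" using x by auto
          then show "x \<in> (\<lambda>i. (take i w, drop i w)) ` ?I"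
            using uv by (intro image_eqI[where x="length u"]) auto
        qed
      qed
    qed
  qed
  finally show ?thesis .
qed

lemma supp_mult_sub:
  assumes "finite (supp a)" "finite (supp b)"
  shows "supp (fa_mult a b) \<subseteq> (\<lambda>x. fst x @ snd x) ` (supp a \<times> supp b)"
proof
  fix w assume "w \<in> supp (fa_mult a b)"
  then have "(\<Sum>x\<in>{x\<in>supp a\<times>supp b. fst x @ snd x = w}. a (fst x) * b (snd x)) \<noteq> 0"
    using prod_rep[OF assms] by (simp add: supp_def)
  then have "{x\<in>supp a\<times>supp b. fst x @ snd x = w} \<noteq> {}"
    by (intro notI) simp
  then obtain x where x: "x \<in> {x\<in>supp a\<times>supp b. fst x @ snd x = w}"
    by blast
  then show "w \<in> (\<lambda>x. fst x @ snd x) ` (supp a \<times> supp b)"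
    by (intro image_eqI[of _ _ x]) auto
qed

lemma FA_mult: "a \<in> FA n \<Longrightarrow> b \<in> FA n \<Longrightarrow> fa_mult a b \<in> FA n"
proof -
  assume a: "a \<in> FA n" and b: "b \<in> FA n"
  then have fa: "finite (supp a)" and fb: "finite (supp b)" by (auto simp: FA_iff)
  have sub: "supp (fa_mult a b) \<subseteq> (\<lambda>x. fst x @ snd x) ` (supp a \<times> supp b)"
    by (rule supp_mult_sub[OF fa fb])
  have "finite (supp (fa_mult a b))"
    using sub fa fb by (meson finite_SigmaI finite_imageI finite_subset)
  moreover have "\<forall>w. fa_mult a b w \<noteq> 0 \<longrightarrow> set w \<subseteq> {..<n}"
  proof (intro allI impI)
    fix w assume "fa_mult a b w \<noteq> 0"
    then have "w \<in> supp (fa_mult a b)" by (simp add: supp_def)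
    then obtain u v where "u \<in> supp a" "v \<in> supp b" "w = u @ v" using sub by auto
    then show "set w \<subseteq> {..<n}" using a b by (auto simp: FA_iff supp_def)
  qed
  ultimately show ?thesis by (simp add: FA_iff)
qed

lemma FA_add: "a \<in> FA n \<Longrightarrow> b \<in> FA n \<Longrightarrow> fa_add a b \<in> FA n"
proof -
  assume a: "a \<in> FA n" and b: "b \<in> FA n"
  have "supp (fa_add a b) \<subseteq> supp a \<union> supp b" by (auto simp: supp_def fa_add_def)
  then show ?thesis using a b unfolding FA_iff by (auto simp: fa_add_def supp_def intro: finite_subset)
qed

lemma FA_diff: "a \<in> FA n \<Longrightarrow> b \<in> FA n \<Longrightarrow> fa_diff a b \<in> FA n"
proof -
  assume a: "a \<in> FA n" and b: "b \<in> FA n"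
  have "supp (fa_diff a b) \<subseteq> supp a \<union> supp b" by (auto simp: supp_def fa_diff_def)
  then show ?thesis using a b unfolding FA_iff by (auto simp: fa_diff_def supp_def intro: finite_subset)
qed

lemma FA_scale: "a \<in> FA n \<Longrightarrow> fa_scale z a \<in> FA n"
proof -
  assume a: "a \<in> FA n"
  have "supp (fa_scale z a) \<subseteq> supp a" by (auto simp: supp_def fa_scale_def)
  then show ?thesis using a unfolding FA_iff by (auto simp: fa_scale_def supp_def intro: finite_subset)
qed

lemma FA_one: "fa_one \<in> FA n"
proof -
  have "supp fa_one \<subseteq> {[]}" by (auto simp: supp_def fa_one_def)
  then show ?thesis unfolding FA_iff by (auto simp: fa_one_def intro: finite_subset)
qed

lemma FA_gen: "i < n \<Longrightarrow> fa_gen i \<in> FA n"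
proof -
  assume i: "i < n"
  have "supp (fa_gen i) \<subseteq> {[i]}" by (auto simp: supp_def fa_gen_def split: if_splits)
  then show ?thesis using i unfolding FA_iff by (auto simp: fa_gen_def intro: finite_subset split: if_splits)
qed

lemma FA_zero: "(\<lambda>_. 0) \<in> FA n"
  by (simp add: FA_iff supp_def)

lemma FA_prod: "(\<forall>x\<in>set xs. x \<in> FA n) \<Longrightarrow> fa_prod xs \<in> FA n"
  by (induction xs) (auto simp: FA_one FA_mult)

lemma FA_sum: "finite V \<Longrightarrow> (\<forall>v\<in>V. h v \<in> FA n) \<Longrightarrow> (\<lambda>w. \<Sum>v\<in>V. g v * h v w) \<in> FA n"
proof (induction V rule: finite_induct)
  case empty
  then show ?case by (simp add: FA_zero)
next
  case (insert x F)
  have "(\<lambda>w. \<Sum>v\<in>insert x F. g v * h v w) = fa_add (fa_scale (g x) (h x)) (\<lambda>w. \<Sum>v\<in>F. g v * h v w)"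
    using insert by (simp add: fa_add_def fa_scale_def)
  then show ?case using insert by (simp add: FA_add FA_scale)
qed


definition lin :: "(vec \<Rightarrow> vec) \<Rightarrow> bool" where
  "lin T \<longleftrightarrow> (\<forall>\<phi> \<psi>. T (\<lambda>M. \<phi> M + \<psi> M) = (\<lambda>M. T \<phi> M + T \<psi> M)) \<and>
             (\<forall>c \<phi>. T (\<lambda>M. c * \<phi> M) = (\<lambda>M. c * T \<phi> M))"

lemma linD1: "lin T \<Longrightarrow> T (\<lambda>M. \<phi> M + \<psi> M) = (\<lambda>M. T \<phi> M + T \<psi> M)"
  by (simp add: lin_def)

lemma linD2: "lin T \<Longrightarrow> T (\<lambda>M. c * \<phi> M) = (\<lambda>M. c * T \<phi> M)"
  by (simp add: lin_def)

lemma lin_zero: "lin T \<Longrightarrow> T (\<lambda>M. 0) = (\<lambda>M. 0)"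
proof -
  assume l: "lin T"
  have "T (\<lambda>M. 0 * (\<lambda>M. 0) M) = (\<lambda>M. 0 * T (\<lambda>M. 0) M)" by (rule linD2[OF l])
  then show ?thesis by simp
qed

lemma lin_sum:
  assumes l: "lin T" and fI: "finite I"
  shows "T (\<lambda>M. \<Sum>i\<in>I. g i * \<psi> i M) = (\<lambda>M. \<Sum>i\<in>I. g i * T (\<psi> i) M)"
  using fI
proof (induction I rule: finite_induct)
  case empty
  then show ?case by (simp add: lin_zero[OF l])
next
  case (insert x F)
  have "T (\<lambda>M. \<Sum>i\<in>insert x F. g i * \<psi> i M) = T (\<lambda>M. g x * \<psi> x M + (\<Sum>i\<in>F. g i * \<psi> i M))"
    using insert by simp
  also have "\<dots> = (\<lambda>M. T (\<lambda>M. g x * \<psi> x M) M + T (\<lambda>M. \<Sum>i\<in>F. g i * \<psi> i M) M)"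
    by (rule linD1[OF l])
  also have "\<dots> = (\<lambda>M. g x * T (\<psi> x) M + (\<Sum>i\<in>F. g i * T (\<psi> i) M))"
    using insert by (simp add: linD2[OF l])
  finally show ?case using insert by simp
qed

lemma lin_diff: "lin T \<Longrightarrow> T (\<lambda>M. \<phi> M - \<psi> M) = (\<lambda>M. T \<phi> M - T \<psi> M)"
proof -
  assume l: "lin T"
  have "T (\<lambda>M. \<phi> M - \<psi> M) = T (\<lambda>M. \<phi> M + (-1) * \<psi> M)" by simp
  also have "\<dots> = (\<lambda>M. T \<phi> M + T (\<lambda>M. (-1) * \<psi> M) M)" by (rule linD1[OF l])
  also have "\<dots> = (\<lambda>M. T \<phi> M - T \<psi> M)" using linD2[OF l, of "-1" \<psi>] by simp
  finally show ?thesis .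
qed

lemma lin_comp: "lin S \<Longrightarrow> lin T \<Longrightarrow> lin (\<lambda>\<phi>. S (T \<phi>))"
  unfolding lin_def by simp

lemma lin_vmul: "lin (vmul k)" unfolding lin_def by (simp add: vlin)
lemma lin_vder: "lin (vder k)" unfolding lin_def by (simp add: vlin)
lemma lin_op: "lin (op n p q c)" unfolding lin_def by (simp add: op_add op_scale)

fun Rw :: "(nat \<Rightarrow> vec \<Rightarrow> vec) \<Rightarrow> nat list \<Rightarrow> vec \<Rightarrow> vec" where
  "Rw \<rho> [] \<phi> = \<phi>"
| "Rw \<rho> (i # w) \<phi> = \<rho> i (Rw \<rho> w \<phi>)"

lemma Rw_append: "Rw \<rho> (u @ v) \<phi> = Rw \<rho> u (Rw \<rho> v \<phi>)"
  by (induction u) simp_all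

lemma lin_Rw:
  assumes l: "\<And>i. lin (\<rho> i)"
  shows "lin (Rw \<rho> w)"
proof (induction w)
  case Nil
  have "Rw \<rho> [] = (\<lambda>\<phi>. \<phi>)" by (rule ext) simp
  then show ?case by (simp add: lin_def)
next
  case (Cons i w)
  have "lin (\<lambda>\<phi>. \<rho> i (Rw \<rho> w \<phi>))" by (rule lin_comp[OF l Cons.IH])
  moreover have "Rw \<rho> (i # w) = (\<lambda>\<phi>. \<rho> i (Rw \<rho> w \<phi>))" by (rule ext) simp
  ultimately show ?case by simp
qed

definition Phi :: "(nat \<Rightarrow> vec \<Rightarrow> vec) \<Rightarrow> fa \<Rightarrow> vec \<Rightarrow> vec" where
  "Phi \<rho> a \<phi> = (\<lambda>M. \<Sum>w\<in>supp a. a w * Rw \<rho> w \<phi> M)"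

lemma Phi_superset: "finite S \<Longrightarrow> supp a \<subseteq> S \<Longrightarrow> Phi \<rho> a \<phi> = (\<lambda>M. \<Sum>w\<in>S. a w * Rw \<rho> w \<phi> M)"
  unfolding Phi_def
  by (rule ext, rule sum.mono_neutral_left) (auto simp: supp_def)

lemma Phi_mult:
  assumes fa: "finite (supp a)" and fb: "finite (supp b)" and l: "\<And>i. lin (\<rho> i)"
  shows "Phi \<rho> (fa_mult a b) \<phi> = Phi \<rho> a (Phi \<rho> b \<phi>)"
proof
  fix M
  let ?T = "(\<lambda>x. fst x @ snd x) ` (supp a \<times> supp b)"
  have fT: "finite ?T" using fa fb by auto
  have "Phi \<rho> (fa_mult a b) \<phi> M = (\<Sum>w\<in>?T. fa_mult a b w * Rw \<rho> w \<phi> M)"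
    using Phi_superset[OF fT supp_mult_sub[OF fa fb]] by simp
  also have "\<dots> = (\<Sum>w\<in>?T. \<Sum>x\<in>{x\<in>supp a\<times>supp b. fst x @ snd x = w}. a (fst x) * b (snd x) * Rw \<rho> w \<phi> M)"
    by (simp add: prod_rep[OF fa fb order_refl order_refl] sum_distrib_right)
  also have "\<dots> = (\<Sum>w\<in>?T. \<Sum>x\<in>{x\<in>supp a\<times>supp b. fst x @ snd x = w}. a (fst x) * b (snd x) * Rw \<rho> (fst x @ snd x) \<phi> M)"
    by (intro sum.cong refl) auto
  also have "\<dots> = (\<Sum>x\<in>supp a\<times>supp b. a (fst x) * b (snd x) * Rw \<rho> (fst x @ snd x) \<phi> M)"
    by (rule sum.group) (use fa fb in auto)
  also have "\<dots> = (\<Sum>u\<in>supp a. \<Sum>v\<in>supp b. a u * b v * Rw \<rho> u (Rw \<rho> v \<phi>) M)"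
    by (simp add: sum.cartesian_product Rw_append case_prod_beta)
  also have "\<dots> = (\<Sum>u\<in>supp a. a u * Rw \<rho> u (\<lambda>M. \<Sum>v\<in>supp b. b v * Rw \<rho> v \<phi> M) M)"
    by (simp add: lin_sum[OF lin_Rw[OF l] fb] sum_distrib_left mult.assoc)
  also have "\<dots> = Phi \<rho> a (Phi \<rho> b \<phi>) M"
    by (simp add: Phi_def)
  finally show "Phi \<rho> (fa_mult a b) \<phi> M = Phi \<rho> a (Phi \<rho> b \<phi>) M" .
qed

lemma Phi_one: "Phi \<rho> fa_one \<phi> = \<phi>"
proof -
  have "Phi \<rho> fa_one \<phi> = (\<lambda>M. \<Sum>w\<in>{[]}. fa_one w * Rw \<rho> w \<phi> M)"
    by (rule Phi_superset) (auto simp: supp_def fa_one_def split: if_splits)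
  then show ?thesis by (simp add: fa_one_def)
qed

lemma Phi_gen: "Phi \<rho> (fa_gen i) \<phi> = \<rho> i \<phi>"
proof -
  have "Phi \<rho> (fa_gen i) \<phi> = (\<lambda>M. \<Sum>w\<in>{[i]}. fa_gen i w * Rw \<rho> w \<phi> M)"
    by (rule Phi_superset) (auto simp: supp_def fa_gen_def split: if_splits)
  then show ?thesis by (simp add: fa_gen_def)
qed

lemma Phi_sum:
  assumes fV: "finite V" and fh: "\<And>v. v \<in> V \<Longrightarrow> finite (supp (h v))"
  shows "Phi \<rho> (\<lambda>w. \<Sum>v\<in>V. g v * h v w) \<phi> = (\<lambda>M. \<Sum>v\<in>V. g v * Phi \<rho> (h v) \<phi> M)"
proof
  fix M
  let ?S = "\<Union>v\<in>V. supp (h v)"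
  have fS: "finite ?S" using fV fh by auto
  have sub: "supp (\<lambda>w. \<Sum>v\<in>V. g v * h v w) \<subseteq> ?S"
  proof
    fix w assume "w \<in> supp (\<lambda>w. \<Sum>v\<in>V. g v * h v w)"
    then have "(\<Sum>v\<in>V. g v * h v w) \<noteq> 0" by (simp add: supp_def)
    then have "\<not> (\<forall>v\<in>V. g v * h v w = 0)" by (intro notI) simp
    then obtain v where "v \<in> V" "g v * h v w \<noteq> 0" by blast
    then show "w \<in> ?S" by (auto simp: supp_def)
  qed
  have "Phi \<rho> (\<lambda>w. \<Sum>v\<in>V. g v * h v w) \<phi> M = (\<Sum>w\<in>?S. (\<Sum>v\<in>V. g v * h v w) * Rw \<rho> w \<phi> M)"
    using Phi_superset[OF fS sub] by simp
  also have "\<dots> = (\<Sum>v\<in>V. g v * (\<Sum>w\<in>?S. h v w * Rw \<rho> w \<phi> M))"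
    by (simp add: sum_distrib_right sum_distrib_left sum.swap[of _ V] mult.assoc)
  also have "\<dots> = (\<Sum>v\<in>V. g v * Phi \<rho> (h v) \<phi> M)"
  proof (intro sum.cong refl)
    fix v assume "v \<in> V"
    then have "supp (h v) \<subseteq> ?S" by auto
    then show "g v * (\<Sum>w\<in>?S. h v w * Rw \<rho> w \<phi> M) = g v * Phi \<rho> (h v) \<phi> M"
      using Phi_superset[OF fS] by simp
  qed
  finally show "Phi \<rho> (\<lambda>w. \<Sum>v\<in>V. g v * h v w) \<phi> M = (\<Sum>v\<in>V. g v * Phi \<rho> (h v) \<phi> M)" .
qed

lemma Phi_add:
  assumes "finite (supp a)" "finite (supp b)"
  shows "Phi \<rho> (fa_add a b) \<phi> = (\<lambda>M. Phi \<rho> a \<phi> M + Phi \<rho> b \<phi> M)"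
proof -
  have fS: "finite (supp a \<union> supp b)" using assms by auto
  have "Phi \<rho> (fa_add a b) \<phi> = (\<lambda>M. \<Sum>w\<in>supp a \<union> supp b. fa_add a b w * Rw \<rho> w \<phi> M)"
    by (rule Phi_superset[OF fS]) (auto simp: supp_def fa_add_def)
  moreover have "Phi \<rho> a \<phi> = (\<lambda>M. \<Sum>w\<in>supp a \<union> supp b. a w * Rw \<rho> w \<phi> M)"
    by (rule Phi_superset[OF fS]) auto
  moreover have "Phi \<rho> b \<phi> = (\<lambda>M. \<Sum>w\<in>supp a \<union> supp b. b w * Rw \<rho> w \<phi> M)"
    by (rule Phi_superset[OF fS]) auto
  ultimately show ?thesis by (simp add: fa_add_def distrib_right sum.distrib)
qed

lemma Phi_diff:
  assumes "finite (supp a)" "finite (supp b)"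
  shows "Phi \<rho> (fa_diff a b) \<phi> = (\<lambda>M. Phi \<rho> a \<phi> M - Phi \<rho> b \<phi> M)"
proof -
  have fS: "finite (supp a \<union> supp b)" using assms by auto
  have "Phi \<rho> (fa_diff a b) \<phi> = (\<lambda>M. \<Sum>w\<in>supp a \<union> supp b. fa_diff a b w * Rw \<rho> w \<phi> M)"
    by (rule Phi_superset[OF fS]) (auto simp: supp_def fa_diff_def)
  moreover have "Phi \<rho> a \<phi> = (\<lambda>M. \<Sum>w\<in>supp a \<union> supp b. a w * Rw \<rho> w \<phi> M)"
    by (rule Phi_superset[OF fS]) auto
  moreover have "Phi \<rho> b \<phi> = (\<lambda>M. \<Sum>w\<in>supp a \<union> supp b. b w * Rw \<rho> w \<phi> M)"
    by (rule Phi_superset[OF fS]) auto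
  ultimately show ?thesis by (simp add: fa_diff_def left_diff_distrib sum_subtractf)
qed

lemma Phi_scale:
  assumes "finite (supp a)"
  shows "Phi \<rho> (fa_scale z a) \<phi> = (\<lambda>M. z * Phi \<rho> a \<phi> M)"
proof -
  have "Phi \<rho> (fa_scale z a) \<phi> = (\<lambda>M. \<Sum>w\<in>supp a. fa_scale z a w * Rw \<rho> w \<phi> M)"
    by (rule Phi_superset[OF assms]) (auto simp: supp_def fa_scale_def)
  then show ?thesis by (simp add: Phi_def fa_scale_def sum_distrib_left mult.assoc)
qed

lemma Phi_zero: "Phi \<rho> (\<lambda>_. 0) \<phi> = (\<lambda>M. 0)"
  by (simp add: Phi_def supp_def)

lemma lin_Phi: "finite (supp a) \<Longrightarrow> (\<And>i. lin (\<rho> i)) \<Longrightarrow> lin (Phi \<rho> a)"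
proof -
  assume f: "finite (supp a)" and l: "\<And>i. lin (\<rho> i)"
  have "\<And>w. lin (Rw \<rho> w)" using l by (rule lin_Rw)
  then show ?thesis
    unfolding lin_def Phi_def
    by (simp add: sum.distrib distrib_left sum_distrib_left mult.left_commute)
qed

lemma Phi_prod:
  assumes "\<forall>x\<in>set xs. x \<in> FA n" "\<And>i. lin (\<rho> i)"
  shows "Phi \<rho> (fa_prod xs) \<phi> = foldr (\<lambda>x \<psi>. Phi \<rho> x \<psi>) xs \<phi>"
  using assms(1)
proof (induction xs arbitrary: \<phi>)
  case Nil
  then show ?case by (simp add: Phi_one)
next
  case (Cons x xs)
  have "finite (supp x)" "finite (supp (fa_prod xs))"
    using Cons.prems FA_prod[of xs n] by (auto simp: FA_iff)
  then show ?case using Cons by (simp add: Phi_mult assms(2))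
qed


lemma fa_mult_one_left: "fa_mult fa_one b = b"
proof
  fix w
  have "fa_mult fa_one b w = (\<Sum>i\<le>length w. (if i = 0 then b (drop i w) else 0))"
    unfolding fa_mult_def fa_one_def
    by (intro sum.cong refl) (auto simp: take_eq_Nil)
  also have "\<dots> = b w" by (simp add: sum.delta)
  finally show "fa_mult fa_one b w = b w" .
qed

lemma fa_mult_scale_left: "fa_mult (fa_scale z a) b = fa_scale z (fa_mult a b)"
  by (rule ext) (simp add: fa_mult_def fa_scale_def sum_distrib_left mult.assoc)

lemma fa_mult_scale_right: "fa_mult a (fa_scale z b) = fa_scale z (fa_mult a b)"
  by (rule ext) (simp add: fa_mult_def fa_scale_def sum_distrib_left mult.left_commute)

lemma ideal_FA: "j \<in> ue_ideal c n \<Longrightarrow> j \<in> FA n"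
proof (induction rule: ue_ideal.induct)
  case (rel i j)
  have "(\<lambda>w. \<Sum>k<n. c i j k * fa_gen k w) \<in> FA n"
    by (rule FA_sum) (auto intro: FA_gen)
  then show ?case using rel
    by (simp add: ue_rel_def FA_diff FA_mult FA_gen)
next
  case zero
  then show ?case by (rule FA_zero)
next
  case (add a b)
  then show ?case by (simp add: FA_add)
next
  case (mult_left a b)
  then show ?case by (simp add: FA_mult)
next
  case (mult_right a b)
  then show ?case by (simp add: FA_mult)
qed

lemma ideal_scale: "j \<in> ue_ideal c n \<Longrightarrow> fa_scale z j \<in> ue_ideal c n"
proof -
  assume j: "j \<in> ue_ideal c n"
  have "fa_scale z fa_one \<in> FA n" by (simp add: FA_scale FA_one)
  then have "fa_mult (fa_scale z fa_one) j \<in> ue_ideal c n" using j by (rule ue_ideal.mult_left)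
  then show ?thesis by (simp add: fa_mult_scale_left fa_mult_one_left)
qed

lemma ideal_diff: "a \<in> ue_ideal c n \<Longrightarrow> b \<in> ue_ideal c n \<Longrightarrow> fa_diff a b \<in> ue_ideal c n"
proof -
  assume a: "a \<in> ue_ideal c n" and b: "b \<in> ue_ideal c n"
  have "fa_diff a b = fa_add a (fa_scale (-1) b)" by (rule ext) (simp add: fa_diff_def fa_add_def fa_scale_def)
  then show ?thesis using a b by (simp add: ue_ideal.add ideal_scale)
qed

definition l1 :: "fa \<Rightarrow> real" where "l1 a = (\<Sum>w\<in>supp a. cmod (a w))"

lemma l1_superset: "finite S \<Longrightarrow> supp a \<subseteq> S \<Longrightarrow> l1 a = (\<Sum>w\<in>S. cmod (a w))"
  unfolding l1_def by (rule sum.mono_neutral_left) (auto simp: supp_def)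

lemma l1_nonneg: "0 \<le> l1 a"
  unfolding l1_def by (rule sum_nonneg) auto

lemma l1_zero: "l1 (\<lambda>_. 0) = 0"
  by (simp add: l1_def supp_def)

lemma l1_add_le:
  assumes "finite (supp a)" "finite (supp b)"
  shows "l1 (fa_add a b) \<le> l1 a + l1 b"
proof -
  have f: "finite (supp a \<union> supp b)" using assms by auto
  have "l1 (fa_add a b) = (\<Sum>w\<in>supp a \<union> supp b. cmod (a w + b w))"
    by (subst l1_superset[OF f]) (auto simp: supp_def fa_add_def)
  also have "\<dots> \<le> (\<Sum>w\<in>supp a \<union> supp b. cmod (a w) + cmod (b w))"
    by (rule sum_mono) (rule norm_triangle_ineq)
  also have "\<dots> = l1 a + l1 b"
    by (simp add: sum.distrib l1_superset[OF f])
  finally show ?thesis .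
qed

lemma l1_diff_le:
  assumes "finite (supp a)" "finite (supp b)"
  shows "l1 (fa_diff a b) \<le> l1 a + l1 b"
proof -
  have f: "finite (supp a \<union> supp b)" using assms by auto
  have "l1 (fa_diff a b) = (\<Sum>w\<in>supp a \<union> supp b. cmod (a w - b w))"
    by (subst l1_superset[OF f]) (auto simp: supp_def fa_diff_def)
  also have "\<dots> \<le> (\<Sum>w\<in>supp a \<union> supp b. cmod (a w) + cmod (b w))"
    by (rule sum_mono) (rule norm_triangle_ineq4)
  also have "\<dots> = l1 a + l1 b"
    by (simp add: sum.distrib l1_superset[OF f])
  finally show ?thesis .
qed

lemma l1_scale:
  assumes "finite (supp a)"
  shows "l1 (fa_scale z a) = cmod z * l1 a"
proof -
  have "l1 (fa_scale z a) = (\<Sum>w\<in>supp a. cmod (z * a w))"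
    by (subst l1_superset[OF assms]) (auto simp: supp_def fa_scale_def)
  then show ?thesis by (simp add: l1_def norm_mult sum_distrib_left)
qed

lemma l1_mult_le:
  assumes fa: "finite (supp a)" and fb: "finite (supp b)"
  shows "l1 (fa_mult a b) \<le> l1 a * l1 b"
proof -
  let ?T = "(\<lambda>x. fst x @ snd x) ` (supp a \<times> supp b)"
  have fT: "finite ?T" using fa fb by auto
  have "l1 (fa_mult a b) = (\<Sum>w\<in>?T. cmod (fa_mult a b w))"
    by (rule l1_superset[OF fT supp_mult_sub[OF fa fb]])
  also have "\<dots> = (\<Sum>w\<in>?T. cmod (\<Sum>x\<in>{x\<in>supp a\<times>supp b. fst x @ snd x = w}. a (fst x) * b (snd x)))"
    by (simp add: prod_rep[OF fa fb order_refl order_refl])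
  also have "\<dots> \<le> (\<Sum>w\<in>?T. \<Sum>x\<in>{x\<in>supp a\<times>supp b. fst x @ snd x = w}. cmod (a (fst x)) * cmod (b (snd x)))"
    by (intro sum_mono) (metis (no_types, lifting) norm_mult norm_sum sum.cong)
  also have "\<dots> = (\<Sum>x\<in>supp a\<times>supp b. cmod (a (fst x)) * cmod (b (snd x)))"
    by (rule sum.group) (use fa fb in auto)
  also have "\<dots> = l1 a * l1 b"
    by (simp add: l1_def sum_product sum.cartesian_product case_prod_beta)
  finally show ?thesis .
qed

lemma inf_add_le:
  fixes X Y :: "real set"
  assumes "X \<noteq> {}" "Y \<noteq> {}" "bdd_below X" "bdd_below Y" "\<forall>x\<in>X. \<forall>y\<in>Y. c \<le> x + y"
  shows "c \<le> Inf X + Inf Y"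
proof -
  have "\<forall>y\<in>Y. c - y \<le> Inf X"
  proof
    fix y assume "y \<in> Y"
    then show "c - y \<le> Inf X" by (intro cInf_greatest) (use assms in \<open>auto simp: algebra_simps\<close>)
  qed
  then have "\<forall>y\<in>Y. c - Inf X \<le> y" by auto
  then have "c - Inf X \<le> Inf Y" using assms by (auto intro!: cInf_greatest)
  then show ?thesis by simp
qed

lemma inf_mult_step:
  fixes Y :: "real set"
  assumes "Y \<noteq> {}" "\<forall>y\<in>Y. 0 \<le> y" "0 \<le> x" "\<forall>y\<in>Y. c \<le> x * y"
  shows "c \<le> x * Inf Y"
proof (rule ccontr)
  assume "\<not> c \<le> x * Inf Y"
  then have lt: "x * Inf Y < c" by simp
  have bY: "bdd_below Y" using assms(2) by (auto simp: bdd_below_def)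
  show False
  proof (cases "x = 0")
    case True
    obtain y where "y \<in> Y" using assms(1) by auto
    then show False using assms(4) lt True by fastforce
  next
    case False
    then have xp: "0 < x" using assms(3) by simp
    then have "Inf Y < c / x" using lt by (simp add: field_simps)
    then obtain y where y: "y \<in> Y" "y < c / x" using cInf_less_iff[OF assms(1) bY] by auto
    then have "x * y < c" using xp by (simp add: field_simps)
    then show False using assms(4) y by fastforce
  qed
qed

lemma inf_mult_le:
  fixes X Y :: "real set"
  assumes "X \<noteq> {}" "Y \<noteq> {}" "\<forall>x\<in>X. 0 \<le> x" "\<forall>y\<in>Y. 0 \<le> y" "\<forall>x\<in>X. \<forall>y\<in>Y. c \<le> x * y"
  shows "c \<le> Inf X * Inf Y"
proof -
  have "\<forall>x\<in>X. c \<le> x * Inf Y" using assms inf_mult_step[of Y] by auto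
  then have "\<forall>x\<in>X. c \<le> Inf Y * x" by (simp add: mult.commute)
  moreover have "0 \<le> Inf Y" using assms by (auto intro!: cInf_greatest)
  ultimately have "c \<le> Inf Y * Inf X" by (intro inf_mult_step) (use assms in auto)
  then show ?thesis by (simp add: mult.commute)
qed

definition pn :: "(nat \<Rightarrow> nat \<Rightarrow> nat \<Rightarrow> complex) \<Rightarrow> nat \<Rightarrow> fa \<Rightarrow> real" where
  "pn c n a = Inf ((\<lambda>j. l1 (fa_diff a j)) ` ue_ideal c n)"

lemma pn_le: "j \<in> ue_ideal c n \<Longrightarrow> pn c n a \<le> l1 (fa_diff a j)"
  unfolding pn_def by (rule cInf_lower) (auto simp: bdd_below_def intro: l1_nonneg)

lemma pn_ge: "(\<And>j. j \<in> ue_ideal c n \<Longrightarrow> x \<le> l1 (fa_diff a j)) \<Longrightarrow> x \<le> pn c n a"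
  unfolding pn_def by (rule cInf_greatest) (auto intro: ue_ideal.zero)

lemma pn_nonneg: "0 \<le> pn c n a"
  by (rule pn_ge) (rule l1_nonneg)

lemma fin_FA: "a \<in> FA n \<Longrightarrow> finite (supp a)"
  by (simp add: FA_iff)

lemma pn_coset_le:
  assumes a: "a \<in> FA n" and b: "b \<in> FA n" and d: "fa_diff a b \<in> ue_ideal c n"
  shows "pn c n a \<le> pn c n b"
proof (rule pn_ge)
  fix j assume j: "j \<in> ue_ideal c n"
  have "fa_add (fa_diff a b) j \<in> ue_ideal c n" using d j by (rule ue_ideal.add)
  then have "pn c n a \<le> l1 (fa_diff a (fa_add (fa_diff a b) j))" by (rule pn_le)
  moreover have "fa_diff a (fa_add (fa_diff a b) j) = fa_diff b j"
    by (rule ext) (simp add: fa_diff_def fa_add_def)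
  ultimately show "pn c n a \<le> l1 (fa_diff b j)" by simp
qed

lemma pn_coset:
  assumes a: "a \<in> FA n" and b: "b \<in> FA n" and d: "fa_diff a b \<in> ue_ideal c n"
  shows "pn c n a = pn c n b"
proof -
  have "fa_diff b a = fa_scale (-1) (fa_diff a b)" by (rule ext) (simp add: fa_diff_def fa_scale_def)
  then have "fa_diff b a \<in> ue_ideal c n" using d by (simp add: ideal_scale)
  then have "pn c n b \<le> pn c n a" by (rule pn_coset_le[OF b a])
  then show ?thesis using pn_coset_le[OF a b d] by simp
qed

lemma pn_add:
  assumes a: "a \<in> FA n" and b: "b \<in> FA n"
  shows "pn c n (fa_add a b) \<le> pn c n a + pn c n b"
  unfolding pn_def[of c n a] pn_def[of c n b]
proof (rule inf_add_le)
  show "(\<lambda>j. l1 (fa_diff a j)) ` ue_ideal c n \<noteq> {}" by (auto intro: ue_ideal.zero)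
  show "(\<lambda>j. l1 (fa_diff b j)) ` ue_ideal c n \<noteq> {}" by (auto intro: ue_ideal.zero)
  show "bdd_below ((\<lambda>j. l1 (fa_diff a j)) ` ue_ideal c n)" by (auto simp: bdd_below_def intro: l1_nonneg)
  show "bdd_below ((\<lambda>j. l1 (fa_diff b j)) ` ue_ideal c n)" by (auto simp: bdd_below_def intro: l1_nonneg)
  show "\<forall>x\<in>(\<lambda>j. l1 (fa_diff a j)) ` ue_ideal c n. \<forall>y\<in>(\<lambda>j. l1 (fa_diff b j)) ` ue_ideal c n. pn c n (fa_add a b) \<le> x + y"
  proof (intro ballI, elim imageE)
    fix x y j1 j2 assume x: "x = l1 (fa_diff a j1)" and j1: "j1 \<in> ue_ideal c n"
      and y: "y = l1 (fa_diff b j2)" and j2: "j2 \<in> ue_ideal c n"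
    have "pn c n (fa_add a b) \<le> l1 (fa_diff (fa_add a b) (fa_add j1 j2))"
      using j1 j2 by (intro pn_le ue_ideal.add)
    also have "fa_diff (fa_add a b) (fa_add j1 j2) = fa_add (fa_diff a j1) (fa_diff b j2)"
      by (rule ext) (simp add: fa_diff_def fa_add_def)
    also have "l1 \<dots> \<le> x + y" unfolding x y
      by (rule l1_add_le) (use a b j1 j2 ideal_FA in \<open>auto intro!: fin_FA FA_diff\<close>)
    finally show "pn c n (fa_add a b) \<le> x + y" .
  qed
qed

lemma pn_zero: "pn c n (\<lambda>_. 0) = 0"
proof -
  have "pn c n (\<lambda>_. 0) \<le> l1 (fa_diff (\<lambda>_. 0) (\<lambda>_. 0))" by (rule pn_le) (rule ue_ideal.zero)
  moreover have "fa_diff (\<lambda>_. 0) (\<lambda>_. 0) = (\<lambda>_. 0)" by (simp add: fa_diff_def)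
  ultimately show ?thesis using pn_nonneg[of c n] by (simp add: l1_zero order_antisym)
qed

lemma pn_scale_le:
  assumes a: "a \<in> FA n" and z: "z \<noteq> 0"
  shows "pn c n (fa_scale z a) \<le> cmod z * pn c n a"
proof -
  have "pn c n (fa_scale z a) / cmod z \<le> pn c n a"
  proof (rule pn_ge)
    fix j assume j: "j \<in> ue_ideal c n"
    have "pn c n (fa_scale z a) \<le> l1 (fa_diff (fa_scale z a) (fa_scale z j))"
      using j by (intro pn_le ideal_scale)
    also have "fa_diff (fa_scale z a) (fa_scale z j) = fa_scale z (fa_diff a j)"
      by (rule ext) (simp add: fa_diff_def fa_scale_def algebra_simps)
    also have "l1 \<dots> = cmod z * l1 (fa_diff a j)"
      using a j ideal_FA by (intro l1_scale fin_FA FA_diff) auto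
    finally show "pn c n (fa_scale z a) / cmod z \<le> l1 (fa_diff a j)"
      using z by (simp add: field_simps)
  qed
  then show ?thesis using z by (simp add: field_simps)
qed

lemma pn_scale:
  assumes a: "a \<in> FA n"
  shows "pn c n (fa_scale z a) = cmod z * pn c n a"
proof (cases "z = 0")
  case True
  have "fa_scale z a = (\<lambda>_. 0)" using True by (simp add: fa_scale_def)
  then show ?thesis using True by (simp add: pn_zero)
next
  case False
  have 1: "pn c n (fa_scale z a) \<le> cmod z * pn c n a" by (rule pn_scale_le[OF a False])
  have "pn c n (fa_scale (inverse z) (fa_scale z a)) \<le> cmod (inverse z) * pn c n (fa_scale z a)"
    using False by (intro pn_scale_le FA_scale a) simp
  moreover have "fa_scale (inverse z) (fa_scale z a) = a" using False by (rule_tac ext) (simp add: fa_scale_def)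
  ultimately have "pn c n a \<le> cmod (inverse z) * pn c n (fa_scale z a)" by simp
  then have "cmod z * pn c n a \<le> cmod z * (cmod (inverse z) * pn c n (fa_scale z a))"
    by (rule mult_left_mono) simp
  also have "\<dots> = pn c n (fa_scale z a)" using False by (simp add: norm_inverse)
  finally have "cmod z * pn c n a \<le> pn c n (fa_scale z a)" .
  then show ?thesis using 1 by simp
qed

lemma pn_mult:
  assumes a: "a \<in> FA n" and b: "b \<in> FA n"
  shows "pn c n (fa_mult a b) \<le> pn c n a * pn c n b"
  unfolding pn_def[of c n a] pn_def[of c n b]
proof (rule inf_mult_le)
  show "(\<lambda>j. l1 (fa_diff a j)) ` ue_ideal c n \<noteq> {}" by (auto intro: ue_ideal.zero)
  show "(\<lambda>j. l1 (fa_diff b j)) ` ue_ideal c n \<noteq> {}" by (auto intro: ue_ideal.zero)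
  show "\<forall>x\<in>(\<lambda>j. l1 (fa_diff a j)) ` ue_ideal c n. 0 \<le> x" by (auto intro: l1_nonneg)
  show "\<forall>x\<in>(\<lambda>j. l1 (fa_diff b j)) ` ue_ideal c n. 0 \<le> x" by (auto intro: l1_nonneg)
  show "\<forall>x\<in>(\<lambda>j. l1 (fa_diff a j)) ` ue_ideal c n. \<forall>y\<in>(\<lambda>j. l1 (fa_diff b j)) ` ue_ideal c n. pn c n (fa_mult a b) \<le> x * y"
  proof (intro ballI, elim imageE)
    fix x y j1 j2 assume x: "x = l1 (fa_diff a j1)" and j1: "j1 \<in> ue_ideal c n"
      and y: "y = l1 (fa_diff b j2)" and j2: "j2 \<in> ue_ideal c n"
    have j1F: "j1 \<in> FA n" and j2F: "j2 \<in> FA n" using j1 j2 by (auto intro: ideal_FA)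
    let ?J = "fa_diff (fa_add (fa_mult j1 b) (fa_mult a j2)) (fa_mult j1 j2)"
    have J: "?J \<in> ue_ideal c n"
      using j1 j2 a b j2F
      by (intro ideal_diff ue_ideal.add ue_ideal.mult_right ue_ideal.mult_left)
    have "pn c n (fa_mult a b) \<le> l1 (fa_diff (fa_mult a b) ?J)" using J by (rule pn_le)
    also have "fa_diff (fa_mult a b) ?J = fa_mult (fa_diff a j1) (fa_diff b j2)"
      by (rule ext) (simp add: fa_mult_def fa_diff_def fa_add_def algebra_simps sum_subtractf sum.distrib)
    also have "l1 \<dots> \<le> x * y" unfolding x y
      by (rule l1_mult_le) (use a b j1F j2F in \<open>auto intro!: fin_FA FA_diff\<close>)
    finally show "pn c n (fa_mult a b) \<le> x * y" .
  qed
qed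

lemma pn_prenorm: "ue_prenorm c n (pn c n)"
  unfolding ue_prenorm_def
  by (intro conjI ballI allI impI pn_coset pn_add pn_scale pn_mult) auto


type_synonym cv = "nat \<Rightarrow> complex"

inductive_set lspan :: "cv set \<Rightarrow> cv set" for S where
  base: "x \<in> S \<Longrightarrow> x \<in> lspan S"
| zero: "(\<lambda>_. 0) \<in> lspan S"
| add: "x \<in> lspan S \<Longrightarrow> y \<in> lspan S \<Longrightarrow> (\<lambda>k. x k + y k) \<in> lspan S"
| smult: "x \<in> lspan S \<Longrightarrow> (\<lambda>k. a * x k) \<in> lspan S"

lemma lspan_mono: "S \<subseteq> lspan T \<Longrightarrow> x \<in> lspan S \<Longrightarrow> x \<in> lspan T"
proof -
  assume sub: "S \<subseteq> lspan T"
  show "x \<in> lspan S \<Longrightarrow> x \<in> lspan T"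
    by (induction rule: lspan.induct) (use sub in \<open>auto intro: lspan.intros\<close>)
qed

lemma lspan_sub: "x \<in> lspan S \<Longrightarrow> y \<in> lspan S \<Longrightarrow> (\<lambda>k. x k - y k) \<in> lspan S"
proof -
  assume x: "x \<in> lspan S" and y: "y \<in> lspan S"
  have "(\<lambda>k. (-1) * y k) \<in> lspan S" using y by (rule lspan.smult)
  then have "(\<lambda>k. x k + (\<lambda>k. (-1) * y k) k) \<in> lspan S" using x by (intro lspan.add)
  then show ?thesis by simp
qed

lemma lspan_sum: "finite I \<Longrightarrow> (\<And>i. i \<in> I \<Longrightarrow> g i \<in> lspan S) \<Longrightarrow> (\<lambda>k. \<Sum>i\<in>I. a i * g i k) \<in> lspan S"
proof (induction I rule: finite_induct)
  case empty
  then show ?case by (simp add: lspan.zero)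
next
  case (insert x F)
  have 1: "(\<lambda>k. a x * g x k) \<in> lspan S" using insert by (intro lspan.smult) auto
  have 2: "(\<lambda>k. \<Sum>i\<in>F. a i * g i k) \<in> lspan S" using insert by auto
  show ?case using lspan.add[OF 1 2] insert by simp
qed

lemma lspan_image:
  assumes add: "\<And>x y. f (\<lambda>k. x k + y k) = (\<lambda>k. f x k + f y k)"
    and sm: "\<And>a x. f (\<lambda>k. a * x k) = (\<lambda>k. a * f x k)"
    and z: "f (\<lambda>_. 0) = (\<lambda>_. 0)"
  shows "x \<in> lspan S \<Longrightarrow> f x \<in> lspan (f ` S)"
proof (induction rule: lspan.induct)
  case (base x)
  then show ?case by (auto intro: lspan.base)
next
  case zero
  then show ?case by (simp add: z lspan.zero)
next
  case (add x y)
  then show ?case by (simp add: assms(1) lspan.add)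
next
  case (smult x a)
  then show ?case by (simp add: assms(2) lspan.smult)
qed

lemma lspan_zeros: "(\<forall>s\<in>S. s = (\<lambda>_. 0)) \<Longrightarrow> x \<in> lspan S \<Longrightarrow> x = (\<lambda>_. 0)"
proof -
  assume h: "\<forall>s\<in>S. s = (\<lambda>_. 0)"
  show "x \<in> lspan S \<Longrightarrow> x = (\<lambda>_. 0)"
    by (induction rule: lspan.induct) (use h in auto)
qed

lemma lspan_insert: "x \<in> lspan (insert w W) \<Longrightarrow> \<exists>a y. y \<in> lspan W \<and> x = (\<lambda>k. y k + a * w k)"
proof (induction rule: lspan.induct)
  case (base x)
  then show ?case
  proof
    assume "x = w" then show ?thesis by (intro exI[of _ 1] exI[of _ "\<lambda>_. 0"]) (auto intro: lspan.zero)
  next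
    assume "x \<in> W" then show ?thesis by (intro exI[of _ 0] exI[of _ x]) (auto intro: lspan.base)
  qed
next
  case zero
  then show ?case by (intro exI[of _ 0] exI[of _ "\<lambda>_. 0"]) (auto intro: lspan.zero)
next
  case (add x y)
  then obtain a1 y1 a2 y2 where "y1 \<in> lspan W" "x = (\<lambda>k. y1 k + a1 * w k)" "y2 \<in> lspan W" "y = (\<lambda>k. y2 k + a2 * w k)"
    by blast
  then show ?case
    by (intro exI[of _ "a1 + a2"] exI[of _ "\<lambda>k. y1 k + y2 k"]) (auto intro: lspan.add simp: algebra_simps)
next
  case (smult x b)
  then obtain a1 y1 where "y1 \<in> lspan W" "x = (\<lambda>k. y1 k + a1 * w k)" by blast
  then show ?case
    by (intro exI[of _ "b * a1"] exI[of _ "\<lambda>k. b * y1 k"]) (auto intro: lspan.smult simp: algebra_simps)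
qed

lemma lspan_insert2: "y \<in> lspan W \<Longrightarrow> (\<lambda>k. y k + a * w k) \<in> lspan (insert w W)"
proof -
  assume y: "y \<in> lspan W"
  have "W \<subseteq> lspan (insert w W)" by (auto intro: lspan.base)
  then have 1: "y \<in> lspan (insert w W)" using y by (rule lspan_mono)
  have 2: "(\<lambda>k. a * w k) \<in> lspan (insert w W)" by (auto intro: lspan.base lspan.smult)
  show ?thesis using lspan.add[OF 1 2] by simp
qed

definition fapp :: "nat \<Rightarrow> cv \<Rightarrow> cv \<Rightarrow> complex" where
  "fapp n f x = (\<Sum>k<n. f k * x k)"

lemma fapp_lin: "fapp n (\<lambda>k. f2 k - r * f1 k) x = fapp n f2 x - r * fapp n f1 x"
  by (simp add: fapp_def algebra_simps sum_subtractf sum_distrib_left)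

lemma fapp_lin2: "fapp n f (\<lambda>k. v k - r * w k) = fapp n f v - r * fapp n f w"
  by (simp add: fapp_def algebra_simps sum_subtractf sum_distrib_left)

lemma functional_exists:
  assumes "finite W"
  shows "(\<forall>x\<in>insert v W. \<forall>k\<ge>n. x k = 0) \<Longrightarrow> v \<notin> lspan W \<Longrightarrow>
     \<exists>f. (\<forall>w\<in>W. fapp n f w = 0) \<and> fapp n f v = 1"
  using assms
proof (induction W arbitrary: v rule: finite_induct)
  case empty
  have "v \<noteq> (\<lambda>_. 0)" using empty lspan.zero by metis
  then obtain k where k: "v k \<noteq> 0" by auto
  then have kn: "k < n" using empty(1) by (meson insertI1 not_le)
  let ?f = "\<lambda>k'. if k' = k then 1 / v k else 0"
  have "fapp n ?f v = (\<Sum>k'<n. if k' = k then v k' / v k else 0)"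
    unfolding fapp_def by (intro sum.cong) auto
  also have "\<dots> = 1" using k kn by (simp add: sum.delta)
  finally have "fapp n ?f v = 1" .
  then show ?case by auto
next
  case (insert w W)
  have vW: "v \<notin> lspan W"
  proof
    assume "v \<in> lspan W"
    then have "(\<lambda>k. v k + 0 * w k) \<in> lspan (insert w W)" by (rule lspan_insert2)
    then show False using insert.prems(2) by simp
  qed
  obtain f1 where f1: "\<forall>u\<in>W. fapp n f1 u = 0" "fapp n f1 v = 1"
    using insert.IH[of v] insert.prems vW by auto
  show ?case
  proof (cases "fapp n f1 w = 0")
    case True
    then show ?thesis using f1 by auto
  next
    case False
    let ?v' = "\<lambda>k. v k - (1 / fapp n f1 w) * w k"
    have v'W: "?v' \<notin> lspan W"
    proof
      assume "?v' \<in> lspan W"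
      then have "(\<lambda>k. ?v' k + (1 / fapp n f1 w) * w k) \<in> lspan (insert w W)" by (rule lspan_insert2)
      then show False using insert.prems(2) by simp
    qed
    have supp': "\<forall>x\<in>insert ?v' W. \<forall>k\<ge>n. x k = 0" using insert.prems(1) by auto
    obtain f2 where f2: "\<forall>u\<in>W. fapp n f2 u = 0" "fapp n f2 ?v' = 1"
      using insert.IH[of ?v'] supp' v'W by auto
    let ?f = "\<lambda>k. f2 k - (fapp n f2 w / fapp n f1 w) * f1 k"
    have lin: "\<And>x. fapp n ?f x = fapp n f2 x - (fapp n f2 w / fapp n f1 w) * fapp n f1 x"
      by (rule fapp_lin)
    have "fapp n f2 ?v' = fapp n f2 v - (1 / fapp n f1 w) * fapp n f2 w"
      by (rule fapp_lin2)
    then have "fapp n f2 v = 1 + fapp n f2 w / fapp n f1 w" using f2(2) by (simp add: algebra_simps)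
    then have "fapp n ?f v = 1" using lin f1(2) by simp
    moreover have "fapp n ?f w = 0" using lin False by simp
    moreover have "\<forall>u\<in>W. fapp n ?f u = 0" using lin f1(1) f2(1) by simp
    ultimately show ?thesis by auto
  qed
qed


definition ev :: "nat \<Rightarrow> cv" where "ev i = (\<lambda>k. if k = i then 1 else 0)"

lemma ev_mult_left: "ev i a * x = (if a = i then x else 0)" by (simp add: ev_def)
lemma if0_mult: "(if P then x else 0) * (y::complex) = (if P then x * y else 0)" by simp
lemma sum_if0: "(\<Sum>j\<in>J. if P then f j else (0::complex)) = (if P then (\<Sum>j\<in>J. f j) else 0)" by simp
lemma mult_ev_right: "x * ev i a = (if a = i then x else 0)" by (simp add: ev_def)

lemma lie_br_ev_left: "a < n \<Longrightarrow> lie_br c n (ev a) w = (\<lambda>k. if k < n then (\<Sum>y<n. w y * c a y k) else 0)"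
  by (rule ext) (simp add: lie_br_def ev_mult_left if0_mult sum_if0 sum.delta)

lemma lie_br_ev: "i < n \<Longrightarrow> j < n \<Longrightarrow> lie_br c n (ev i) (ev j) = (\<lambda>k. if k < n then c i j k else 0)"
proof -
  assume i: "i < n" and j: "j < n"
  have "\<And>k. (\<Sum>y<n. ev j y * c i y k) = c i j k"
    using j by (simp add: ev_mult_left sum.delta)
  then show ?thesis using i by (subst lie_br_ev_left) auto
qed

lemma lie_br_expand: "lie_br c n u v = (\<lambda>k. \<Sum>p\<in>{..<n}\<times>{..<n}. (u (fst p) * v (snd p)) * lie_br c n (ev (fst p)) (ev (snd p)) k)"
proof
  fix k
  show "lie_br c n u v k = (\<Sum>p\<in>{..<n}\<times>{..<n}. (u (fst p) * v (snd p)) * lie_br c n (ev (fst p)) (ev (snd p)) k)"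
  proof (cases "k < n")
    case True
    have "(\<Sum>p\<in>{..<n}\<times>{..<n}. (u (fst p) * v (snd p)) * lie_br c n (ev (fst p)) (ev (snd p)) k)
        = (\<Sum>p\<in>{..<n}\<times>{..<n}. u (fst p) * v (snd p) * c (fst p) (snd p) k)"
      by (intro sum.cong refl) (auto simp: lie_br_ev True)
    also have "\<dots> = lie_br c n u v k"
      by (simp add: lie_br_def True sum.cartesian_product')
    finally show ?thesis by simp
  next
    case False
    then show ?thesis by (simp add: lie_br_def)
  qed
qed

lemma lie_br_add2: "lie_br c n u (\<lambda>k. x k + y k) = (\<lambda>k. lie_br c n u x k + lie_br c n u y k)"
  by (rule ext) (simp add: lie_br_def algebra_simps sum.distrib)
lemma lie_br_smult2: "lie_br c n u (\<lambda>k. a * x k) = (\<lambda>k. a * lie_br c n u x k)"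
  by (rule ext) (simp add: lie_br_def algebra_simps sum_distrib_left)
lemma lie_br_zero2: "lie_br c n u (\<lambda>_. 0) = (\<lambda>_. 0)"
  by (rule ext) (simp add: lie_br_def)
lemma lie_br_add1: "lie_br c n (\<lambda>k. x k + y k) u = (\<lambda>k. lie_br c n x u k + lie_br c n y u k)"
  by (rule ext) (simp add: lie_br_def algebra_simps sum.distrib)

lemma nest_add: "nest_br c n (\<lambda>k. x k + y k) us = (\<lambda>k. nest_br c n x us k + nest_br c n y us k)"
  by (induction us) (simp_all add: lie_br_add2)
lemma nest_smult: "nest_br c n (\<lambda>k. a * x k) us = (\<lambda>k. a * nest_br c n x us k)"
  by (induction us) (simp_all add: lie_br_smult2)
lemma nest_zero: "nest_br c n (\<lambda>_. 0) us = (\<lambda>_. 0)"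
  by (induction us) (simp_all add: lie_br_zero2)
lemma nest_append: "nest_br c n x (us @ vs) = nest_br c n (nest_br c n x vs) us"
  by (induction us) simp_all

lemma skew:
  assumes L: "is_lie_algebra c n" and i: "i < n" and j: "j < n" and k: "k < n"
  shows "c j i k = - c i j k"
proof -
  have z: "\<And>u. lie_br c n u u = (\<lambda>_. 0)" using L by (simp add: is_lie_algebra_def)
  have ii: "c i i k = 0" using z[of "ev i"] lie_br_ev[OF i i, of c] k by (metis)
  have jj: "c j j k = 0" using z[of "ev j"] lie_br_ev[OF j j, of c] k by (metis)
  let ?u = "\<lambda>k. ev i k + ev j k"
  have "lie_br c n ?u ?u k = lie_br c n (ev i) (ev i) k + lie_br c n (ev i) (ev j) k + lie_br c n (ev j) (ev i) k + lie_br c n (ev j) (ev j) k"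
    by (simp add: lie_br_add1 lie_br_add2)
  also have "\<dots> = c i i k + c i j k + c j i k + c j j k"
    using i j k by (simp add: lie_br_ev)
  finally have "c i i k + c i j k + c j i k + c j j k = 0" using z[of ?u] by metis
  then show ?thesis using ii jj by (simp add: algebra_simps add_eq_0_iff)
qed

definition Wset :: "(nat \<Rightarrow> nat \<Rightarrow> nat \<Rightarrow> complex) \<Rightarrow> nat \<Rightarrow> cv set" where
  "Wset c n = (\<lambda>(a, i, j). lie_br c n (ev a) (lie_br c n (ev i) (ev j))) ` ({..<n} \<times> {..<n} \<times> {..<n})"

definition Gset :: "(nat \<Rightarrow> nat \<Rightarrow> nat \<Rightarrow> complex) \<Rightarrow> nat \<Rightarrow> nat \<Rightarrow> cv set" where
  "Gset c n m = {nest_br c n x us | x us. length us = m}"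

lemma G_step:
  assumes H: "\<forall>i<n. \<forall>j<n. lie_br c n (ev i) (ev j) \<in> lspan (Wset c n)"
    and m: "1 \<le> m"
  shows "Gset c n m \<subseteq> lspan (Gset c n (Suc m))"
proof
  fix g assume "g \<in> Gset c n m"
  then obtain x us where g: "g = nest_br c n x us" and len: "length us = m" by (auto simp: Gset_def)
  then have "us \<noteq> []" using m by auto
  then obtain us' u where us: "us = us' @ [u]" by (metis rev_exhaust)
  have g2: "g = nest_br c n (lie_br c n u x) us'" using g us by (simp add: nest_append)
  have "lie_br c n u x = (\<lambda>k. \<Sum>p\<in>{..<n}\<times>{..<n}. (u (fst p) * x (snd p)) * lie_br c n (ev (fst p)) (ev (snd p)) k)"
    by (rule lie_br_expand)
  moreover have "\<dots> \<in> lspan (Wset c n)"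
    by (rule lspan_sum) (use H in auto)
  ultimately have inW: "lie_br c n u x \<in> lspan (Wset c n)" by simp
  have "nest_br c n (lie_br c n u x) us' \<in> lspan ((\<lambda>y. nest_br c n y us') ` Wset c n)"
    by (rule lspan_image[where f="\<lambda>y. nest_br c n y us'"]) (simp_all add: nest_add nest_smult nest_zero inW)
  moreover have "(\<lambda>y. nest_br c n y us') ` Wset c n \<subseteq> lspan (Gset c n (Suc m))"
  proof
    fix y assume "y \<in> (\<lambda>y. nest_br c n y us') ` Wset c n"
    then obtain a i j where y: "y = nest_br c n (lie_br c n (ev a) (lie_br c n (ev i) (ev j))) us'"
      by (auto simp: Wset_def)
    have "y = nest_br c n (ev j) (us' @ [ev a, ev i])" using y by (simp add: nest_append)
    moreover have "length (us' @ [ev a, ev i]) = Suc m" using len us by simp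
    ultimately have "y \<in> Gset c n (Suc m)" unfolding Gset_def by blast
    then show "y \<in> lspan (Gset c n (Suc m))" by (rule lspan.base)
  qed
  ultimately show "g \<in> lspan (Gset c n (Suc m))" using g2 lspan_mono by metis
qed

lemma br_in_G:
  assumes H: "\<forall>i<n. \<forall>j<n. lie_br c n (ev i) (ev j) \<in> lspan (Wset c n)"
    and i: "i < n" and j: "j < n"
  shows "1 \<le> m \<Longrightarrow> lie_br c n (ev i) (ev j) \<in> lspan (Gset c n m)"
proof (induction m rule: dec_induct)
  case base
  have "lie_br c n (ev i) (ev j) = nest_br c n (ev j) [ev i]" by simp
  then have "lie_br c n (ev i) (ev j) \<in> Gset c n 1" unfolding Gset_def
    by (intro CollectI exI[of _ "ev j"] exI[of _ "[ev i]"]) simp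
  then show ?case by (rule lspan.base)
next
  case (step m)
  have "Gset c n m \<subseteq> lspan (Gset c n (Suc m))" by (rule G_step[OF H step.hyps(1)])
  then show ?case by (rule lspan_mono[OF _ step.IH])
qed

lemma exists_br:
  assumes N: "lie_nilpotent c n" and A: "\<not> lie_abelian c n"
  shows "\<exists>i0 j0. i0 < n \<and> j0 < n \<and> lie_br c n (ev i0) (ev j0) \<notin> lspan (Wset c n)"
proof (rule ccontr)
  assume "\<not> ?thesis"
  then have H: "\<forall>i<n. \<forall>j<n. lie_br c n (ev i) (ev j) \<in> lspan (Wset c n)" by auto
  obtain m0 where m0: "\<forall>x us. length us = Suc m0 \<longrightarrow> nest_br c n x us = (\<lambda>_. 0)"
    using N by (auto simp: lie_nilpotent_def)
  have zG: "\<forall>s\<in>Gset c n (Suc m0). s = (\<lambda>_. 0)" using m0 by (auto simp: Gset_def)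
  have br0: "\<And>i j. i < n \<Longrightarrow> j < n \<Longrightarrow> lie_br c n (ev i) (ev j) = (\<lambda>_. 0)"
    using br_in_G[OF H] lspan_zeros[OF zG] by simp
  have "lie_abelian c n"
    unfolding lie_abelian_def
  proof (intro allI)
    fix u v
    show "lie_br c n u v = (\<lambda>_. 0)"
      by (subst lie_br_expand) (rule ext, rule sum.neutral, auto simp: br0)
  qed
  then show False using A by simp
qed

lemma exists_f:
  assumes N: "lie_nilpotent c n" and A: "\<not> lie_abelian c n"
  shows "\<exists>f i0 j0. i0 < n \<and> j0 < n \<and> (\<Sum>k<n. c i0 j0 k * f k) = 1 \<and>
     (\<forall>a i j. a < n \<longrightarrow> i < n \<longrightarrow> j < n \<longrightarrow> (\<Sum>y<n. c i j y * (\<Sum>m<n. c a y m * f m)) = 0)"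
proof -
  obtain i0 j0 where ij: "i0 < n" "j0 < n" and nv: "lie_br c n (ev i0) (ev j0) \<notin> lspan (Wset c n)"
    using exists_br[OF N A] by auto
  have fW: "finite (Wset c n)" by (simp add: Wset_def)
  have supp: "\<forall>x\<in>insert (lie_br c n (ev i0) (ev j0)) (Wset c n). \<forall>k\<ge>n. x k = 0"
    by (auto simp: Wset_def lie_br_def)
  obtain f where f: "\<forall>w\<in>Wset c n. fapp n f w = 0" "fapp n f (lie_br c n (ev i0) (ev j0)) = 1"
    using functional_exists[OF fW supp nv] by auto
  have 1: "(\<Sum>k<n. c i0 j0 k * f k) = 1"
    using f(2) ij by (simp add: fapp_def lie_br_ev mult.commute)
  have 2: "(\<Sum>y<n. c i j y * (\<Sum>m<n. c a y m * f m)) = 0" if a: "a < n" and i: "i < n" and j: "j < n" for a i j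
  proof -
    have "lie_br c n (ev a) (lie_br c n (ev i) (ev j)) \<in> Wset c n"
      unfolding Wset_def by (rule image_eqI[where x="(a,i,j)"]) (use a i j in auto)
    then have z: "fapp n f (lie_br c n (ev a) (lie_br c n (ev i) (ev j))) = 0" using f(1) by auto
    have e: "lie_br c n (ev a) (lie_br c n (ev i) (ev j)) = (\<lambda>m. if m < n then (\<Sum>y<n. c i j y * c a y m) else 0)"
    proof -
      have "lie_br c n (ev a) (lie_br c n (ev i) (ev j)) = (\<lambda>m. if m < n then (\<Sum>y<n. lie_br c n (ev i) (ev j) y * c a y m) else 0)"
        using a by (rule lie_br_ev_left)
      also have "\<dots> = (\<lambda>m. if m < n then (\<Sum>y<n. c i j y * c a y m) else 0)"
        using i j by (intro ext) (auto simp: lie_br_ev intro!: sum.cong)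
      finally show ?thesis .
    qed
    have "fapp n f (lie_br c n (ev a) (lie_br c n (ev i) (ev j))) = (\<Sum>m<n. f m * (\<Sum>y<n. c i j y * c a y m))"
      unfolding e fapp_def by (intro sum.cong) auto
    also have "\<dots> = (\<Sum>m<n. \<Sum>y<n. f m * (c i j y * c a y m))"
      by (simp only: sum_distrib_left)
    also have "\<dots> = (\<Sum>y<n. \<Sum>m<n. f m * (c i j y * c a y m))"
      by (rule sum.swap)
    also have "\<dots> = (\<Sum>y<n. \<Sum>m<n. c i j y * (c a y m * f m))"
      by (simp only: ac_simps)
    also have "\<dots> = (\<Sum>y<n. c i j y * (\<Sum>m<n. c a y m * f m))"
      by (simp only: sum_distrib_left)
    finally show ?thesis using z by simp
  qed
  show ?thesis using 1 2 ij by blast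
qed


lemma op_cong:
  assumes P: "\<And>k. k \<le> n \<Longrightarrow> p k = p' k" and Q: "\<And>k. k \<le> n \<Longrightarrow> q k = q' k"
  shows "op n p q c = op n p' q' c"
  unfolding op_def
  apply (intro ext arg_cong2[where f="(+)"] sum.cong refl)
  using P Q by auto

lemma op_lincomb:
  assumes "finite K"
  shows "(\<lambda>M. \<Sum>k\<in>K. a k * op n (p k) (q k) (cc k) \<phi> M) =
    op n (\<lambda>l. \<Sum>k\<in>K. a k * p k l) (\<lambda>l. \<Sum>k\<in>K. a k * q k l) (\<Sum>k\<in>K. a k * cc k) \<phi>"
proof
  fix M
  have "(\<Sum>k\<in>K. a k * op n (p k) (q k) (cc k) \<phi> M) =
     (\<Sum>k\<in>K. (\<Sum>l\<le>n. a k * p k l * vmul (Suc n) (vder l \<phi>) M) + (\<Sum>l\<le>n. a k * q k l * vmul l \<phi> M) + a k * cc k * vmul (Suc n) \<phi> M)"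
    by (simp add: op_def distrib_left sum_distrib_left mult.assoc)
  also have "\<dots> = (\<Sum>l\<le>n. (\<Sum>k\<in>K. a k * p k l) * vmul (Suc n) (vder l \<phi>) M) + (\<Sum>l\<le>n. (\<Sum>k\<in>K. a k * q k l) * vmul l \<phi> M) + (\<Sum>k\<in>K. a k * cc k) * vmul (Suc n) \<phi> M"
    by (simp add: sum.distrib sum_distrib_right sum.swap[of _ K])
  finally show "(\<Sum>k\<in>K. a k * op n (p k) (q k) (cc k) \<phi> M) = op n (\<lambda>l. \<Sum>k\<in>K. a k * p k l) (\<lambda>l. \<Sum>k\<in>K. a k * q k l) (\<Sum>k\<in>K. a k * cc k) \<phi> M"
    by (simp add: op_def)
qed

locale rep =
  fixes c :: "nat \<Rightarrow> nat \<Rightarrow> nat \<Rightarrow> complex" and n :: nat and f :: "nat \<Rightarrow> complex" and i0 j0 :: nat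
  assumes skew: "\<And>i j k. i < n \<Longrightarrow> j < n \<Longrightarrow> k < n \<Longrightarrow> c j i k = - c i j k"
    and TT: "\<And>a i j. a < n \<Longrightarrow> i < n \<Longrightarrow> j < n \<Longrightarrow> (\<Sum>y<n. c i j y * (\<Sum>m<n. c a y m * f m)) = 0"
    and one: "(\<Sum>k<n. c i0 j0 k * f k) = 1"
    and i0: "i0 < n" and j0: "j0 < n"
begin

definition B :: "nat \<Rightarrow> nat \<Rightarrow> complex" where "B a b = (\<Sum>m<n. c a b m * f m)"

lemma T: "a < n \<Longrightarrow> i < n \<Longrightarrow> j < n \<Longrightarrow> (\<Sum>y<n. c i j y * B a y) = 0"
  using TT by (simp add: B_def)

lemma Bskew: "a < n \<Longrightarrow> b < n \<Longrightarrow> B b a = - B a b"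
proof -
  assume a: "a < n" and b: "b < n"
  have "B b a = (\<Sum>m<n. - (c a b m * f m))"
    unfolding B_def by (intro sum.cong) (auto simp: skew[OF a b])
  then show ?thesis by (simp add: B_def sum_negf)
qed

lemma Bdiag: "a < n \<Longrightarrow> B a a = 0"
  using Bskew[of a a] by simp

lemma T2: "a < n \<Longrightarrow> i < n \<Longrightarrow> j < n \<Longrightarrow> (\<Sum>y<n. c i j y * B y a) = 0"
proof -
  assume a: "a < n" and i: "i < n" and j: "j < n"
  have "(\<Sum>y<n. c i j y * B y a) = (\<Sum>y<n. - (c i j y * B a y))"
    by (intro sum.cong) (auto simp: Bskew[OF a])
  also have "\<dots> = - (\<Sum>y<n. c i j y * B a y)" by (rule sum_negf)
  finally show ?thesis using T[OF a i j] by simp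
qed

lemma B01: "B i0 j0 = 1" using one by (simp add: B_def)
lemma B10: "B j0 i0 = -1" using Bskew[OF i0 j0] unfolding B01 .

definition Bp :: "nat \<Rightarrow> nat \<Rightarrow> complex" where
  "Bp l a = B l a - (B i0 l * B j0 a - B j0 l * B i0 a)"

definition pv :: "nat \<Rightarrow> nat \<Rightarrow> complex" where
  "pv a k = (if k < n then (if k = a then 1 else 0) else B i0 a)"

definition qv :: "nat \<Rightarrow> nat \<Rightarrow> complex" where
  "qv a k = (if k < n then Bp k a / 2 else B j0 a)"

definition rho :: "nat \<Rightarrow> vec \<Rightarrow> vec" where
  "rho a = op n (pv a) (qv a) (f a)"

lemma lin_rho: "lin (rho a)" by (simp add: rho_def lin_op)

lemma sum_atMost_split: "(\<Sum>k\<le>n. g k) = (\<Sum>k<n. g k) + g (n::nat)"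
  by (simp add: lessThan_Suc_atMost[symmetric])

lemma omega: "a < n \<Longrightarrow> b < n \<Longrightarrow> (\<Sum>k\<le>n. pv a k * qv b k - pv b k * qv a k) = B a b"
proof -
  assume a: "a < n" and b: "b < n"
  have "(\<Sum>k\<le>n. pv a k * qv b k - pv b k * qv a k) = (\<Sum>k<n. pv a k * qv b k - pv b k * qv a k) + (B i0 a * B j0 b - B i0 b * B j0 a)"
    by (simp add: sum_atMost_split pv_def qv_def)
  also have "(\<Sum>k<n. pv a k * qv b k - pv b k * qv a k) = (\<Sum>k<n. (if k = a then qv b k else 0) - (if k = b then qv a k else 0))"
    by (intro sum.cong) (auto simp: pv_def)
  also have "\<dots> = Bp a b / 2 - Bp b a / 2"
    using a b by (simp add: sum_subtractf sum.delta qv_def)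
  also have "Bp a b / 2 - Bp b a / 2 + (B i0 a * B j0 b - B i0 b * B j0 a) = B a b"
    using a b by (simp add: Bp_def Bskew[of a b] field_simps)
  finally show ?thesis .
qed

lemma rho_comm: "a < n \<Longrightarrow> b < n \<Longrightarrow> rho a (rho b \<phi>) = (\<lambda>M. rho b (rho a \<phi>) M + B a b * vmul (Suc n) \<phi> M)"
  unfolding rho_def by (subst op_comm) (simp add: omega)

definition Dv :: "nat \<Rightarrow> nat \<Rightarrow> vec \<Rightarrow> vec" where
  "Dv i j \<phi> = (\<lambda>M. \<Sum>l<n. c i j l * vder l \<phi> M)"

definition Kset :: "vec set" where
  "Kset = {\<phi>. \<forall>i j. i < n \<longrightarrow> j < n \<longrightarrow> Dv i j \<phi> = (\<lambda>M. 0)}"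

lemma qsum0: "i < n \<Longrightarrow> j < n \<Longrightarrow> a < n \<Longrightarrow> (\<Sum>l<n. c i j l * qv a l) = 0"
proof -
  assume i: "i < n" and j: "j < n" and a: "a < n"
  have "(\<Sum>l<n. c i j l * qv a l) = (\<Sum>l<n. (c i j l * B l a - (c i j l * B i0 l) * B j0 a + (c i j l * B j0 l) * B i0 a) / 2)"
    by (intro sum.cong) (auto simp: qv_def Bp_def algebra_simps)
  also have "\<dots> = ((\<Sum>l<n. c i j l * B l a) - (\<Sum>l<n. c i j l * B i0 l) * B j0 a + (\<Sum>l<n. c i j l * B j0 l) * B i0 a) / 2"
    by (simp add: sum_divide_distrib[symmetric] sum.distrib sum_subtractf sum_distrib_right)
  also have "\<dots> = 0" using T2[OF a i j] T[OF i0 i j] T[OF j0 i j] by simp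
  finally show ?thesis .
qed

lemma Dv_rho: "i < n \<Longrightarrow> j < n \<Longrightarrow> a < n \<Longrightarrow> Dv i j (rho a \<phi>) = rho a (Dv i j \<phi>)"
proof -
  assume i: "i < n" and j: "j < n" and a: "a < n"
  have "Dv i j (rho a \<phi>) = (\<lambda>M. \<Sum>l<n. c i j l * (rho a (vder l \<phi>) M + qv a l * \<phi> M))"
    unfolding Dv_def rho_def by (intro ext sum.cong refl) (simp add: vder_op)
  also have "\<dots> = (\<lambda>M. (\<Sum>l<n. c i j l * rho a (vder l \<phi>) M) + (\<Sum>l<n. c i j l * qv a l) * \<phi> M)"
    by (simp add: distrib_left sum.distrib sum_distrib_right mult.assoc)
  also have "\<dots> = (\<lambda>M. \<Sum>l<n. c i j l * rho a (vder l \<phi>) M)"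
    using qsum0[OF i j a] by simp
  also have "\<dots> = rho a (Dv i j \<phi>)"
    unfolding Dv_def by (simp add: lin_sum[OF lin_rho])
  finally show ?thesis .
qed

lemma rho_K: "a < n \<Longrightarrow> \<phi> \<in> Kset \<Longrightarrow> rho a \<phi> \<in> Kset"
  unfolding Kset_def by (auto simp: Dv_rho lin_zero[OF lin_rho])

lemma lin_Dv: "lin (Dv i j)"
  unfolding lin_def Dv_def by (simp add: vlin distrib_left sum.distrib mult.left_commute sum_distrib_left)

lemma Rw_K: "set w \<subseteq> {..<n} \<Longrightarrow> \<phi> \<in> Kset \<Longrightarrow> Rw rho w \<phi> \<in> Kset"
  by (induction w) (auto simp: rho_K)

lemma Phi_K: "a \<in> FA n \<Longrightarrow> \<phi> \<in> Kset \<Longrightarrow> Phi rho a \<phi> \<in> Kset"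
proof -
  assume a: "a \<in> FA n" and phi: "\<phi> \<in> Kset"
  have fa: "finite (supp a)" using a by (simp add: FA_iff)
  show ?thesis
    unfolding Kset_def
  proof (intro CollectI allI impI)
    fix i j assume i: "i < n" and j: "j < n"
    have "Dv i j (Phi rho a \<phi>) = (\<lambda>M. \<Sum>w\<in>supp a. a w * Dv i j (Rw rho w \<phi>) M)"
      unfolding Phi_def by (rule lin_sum[OF lin_Dv fa])
    also have "\<dots> = (\<lambda>M. 0)"
    proof (intro ext sum.neutral ballI)
      fix M w assume "w \<in> supp a"
      then have "set w \<subseteq> {..<n}" using a by (auto simp: FA_iff supp_def)
      then have "Rw rho w \<phi> \<in> Kset" using phi by (rule Rw_K)
      then show "a w * Dv i j (Rw rho w \<phi>) M = 0" using i j by (simp add: Kset_def)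
    qed
    finally show "Dv i j (Phi rho a \<phi>) = (\<lambda>M. 0)" .
  qed
qed

lemma Phi_rel: "i < n \<Longrightarrow> j < n \<Longrightarrow> \<phi> \<in> Kset \<Longrightarrow> Phi rho (ue_rel c n i j) \<phi> = (\<lambda>M. 0)"
proof -
  assume i: "i < n" and j: "j < n" and phi: "\<phi> \<in> Kset"
  have fg: "\<And>k. finite (supp (fa_gen k))" by (simp add: supp_def fa_gen_def)
  have fd: "finite (supp (fa_diff (fa_mult (fa_gen i) (fa_gen j)) (fa_mult (fa_gen j) (fa_gen i))))"
    using FA_diff[OF FA_mult[OF FA_gen[OF i] FA_gen[OF j]] FA_mult[OF FA_gen[OF j] FA_gen[OF i]]]
    by (simp add: FA_iff)
  have "(\<lambda>w. \<Sum>k<n. c i j k * fa_gen k w) \<in> FA n" by (rule FA_sum) (auto intro: FA_gen)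
  then have fs: "finite (supp (\<lambda>w. \<Sum>k<n. c i j k * fa_gen k w))" by (simp add: FA_iff)
  have S: "Phi rho (\<lambda>w. \<Sum>k<n. c i j k * fa_gen k w) \<phi> = (\<lambda>M. \<Sum>k<n. c i j k * rho k \<phi> M)"
    by (simp add: Phi_sum fg Phi_gen)
  also have "\<dots> = op n (\<lambda>l. \<Sum>k<n. c i j k * pv k l) (\<lambda>l. \<Sum>k<n. c i j k * qv k l) (\<Sum>k<n. c i j k * f k) \<phi>"
    unfolding rho_def by (rule op_lincomb) simp
  also have "\<dots> = op n (\<lambda>l. if l < n then c i j l else 0) (\<lambda>l. 0) (B i j) \<phi>"
  proof -
    have P: "(\<Sum>k<n. c i j k * pv k l) = (if l < n then c i j l else 0)" if "l \<le> n" for l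
    proof (cases "l < n")
      case True
      have "(\<Sum>k<n. c i j k * pv k l) = (\<Sum>k<n. if k = l then c i j k else 0)"
        using True by (intro sum.cong) (auto simp: pv_def)
      then show ?thesis using True by (simp add: sum.delta)
    next
      case False
      then have "(\<Sum>k<n. c i j k * pv k l) = (\<Sum>k<n. c i j k * B i0 k)" by (simp add: pv_def)
      then show ?thesis using T[OF i0 i j] False by simp
    qed
    have Q: "(\<Sum>k<n. c i j k * qv k l) = 0" if "l \<le> n" for l
    proof (cases "l < n")
      case True
      have "(\<Sum>k<n. c i j k * qv k l) = (\<Sum>k<n. (c i j k * B l k - (c i j k * B j0 k) * B i0 l + (c i j k * B i0 k) * B j0 l) / 2)"
        using True by (intro sum.cong) (auto simp: qv_def Bp_def algebra_simps)
      also have "\<dots> = ((\<Sum>k<n. c i j k * B l k) - (\<Sum>k<n. c i j k * B j0 k) * B i0 l + (\<Sum>k<n. c i j k * B i0 k) * B j0 l) / 2"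
        by (simp add: sum_divide_distrib[symmetric] sum.distrib sum_subtractf sum_distrib_right)
      also have "\<dots> = 0" using T[OF True i j] T[OF i0 i j] T[OF j0 i j] by simp
      finally show ?thesis .
    next
      case False
      then have "(\<Sum>k<n. c i j k * qv k l) = (\<Sum>k<n. c i j k * B j0 k)" by (simp add: qv_def)
      then show ?thesis using T[OF j0 i j] by simp
    qed
    have F: "(\<Sum>k<n. c i j k * f k) = B i j" by (simp add: B_def)
    show ?thesis unfolding F by (rule fun_cong[OF op_cong]) (use P Q in auto)
  qed
  finally have S2: "Phi rho (\<lambda>w. \<Sum>k<n. c i j k * fa_gen k w) \<phi> = op n (\<lambda>l. if l < n then c i j l else 0) (\<lambda>l. 0) (B i j) \<phi>" .
  have S3: "op n (\<lambda>l. if l < n then c i j l else 0) (\<lambda>l. 0) (B i j) \<phi> = (\<lambda>M. vmul (Suc n) (Dv i j \<phi>) M + B i j * vmul (Suc n) \<phi> M)"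
    by (rule ext) (simp add: op_def sum_atMost_split Dv_def vlin)
  have D0: "Dv i j \<phi> = (\<lambda>M. 0)" using phi i j by (simp add: Kset_def)
  have "Phi rho (ue_rel c n i j) \<phi> = (\<lambda>M. rho i (rho j \<phi>) M - rho j (rho i \<phi>) M - Phi rho (\<lambda>w. \<Sum>k<n. c i j k * fa_gen k w) \<phi> M)"
  proof -
    have m1: "finite (supp (fa_mult (fa_gen i) (fa_gen j)))"
      using FA_mult[OF FA_gen[OF i] FA_gen[OF j]] by (simp add: FA_iff)
    have m2: "finite (supp (fa_mult (fa_gen j) (fa_gen i)))"
      using FA_mult[OF FA_gen[OF j] FA_gen[OF i]] by (simp add: FA_iff)
    show ?thesis unfolding ue_rel_def
      by (simp add: Phi_diff fd fs m1 m2 Phi_mult fg lin_rho Phi_gen)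
  qed
  also have "\<dots> = (\<lambda>M. 0)"
  proof -
    have RC: "rho i (rho j \<phi>) = (\<lambda>M. rho j (rho i \<phi>) M + B i j * vmul (Suc n) \<phi> M)"
      by (rule rho_comm[OF i j])
    show ?thesis by (simp add: RC S2 S3 D0 vlin)
  qed
  finally show ?thesis .
qed

lemma Phi_ideal: "x \<in> ue_ideal c n \<Longrightarrow> \<forall>\<phi>\<in>Kset. Phi rho x \<phi> = (\<lambda>M. 0)"
proof (induction rule: ue_ideal.induct)
  case (rel i j)
  then show ?case by (simp add: Phi_rel)
next
  case zero
  then show ?case by (simp add: Phi_zero)
next
  case (add a b)
  have "finite (supp a)" "finite (supp b)" using add.hyps ideal_FA by (auto simp: FA_iff)
  then show ?case using add.IH by (simp add: Phi_add)
next
  case (mult_left a b)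
  have "finite (supp a)" "finite (supp b)" using mult_left.hyps ideal_FA by (auto simp: FA_iff)
  then show ?case using mult_left.IH by (simp add: Phi_mult lin_rho lin_zero[OF lin_Phi])
next
  case (mult_right a b)
  have "finite (supp a)" "finite (supp b)" using mult_right.hyps ideal_FA by (auto simp: FA_iff)
  then show ?case using mult_right.IH mult_right.hyps(1) by (simp add: Phi_mult lin_rho Phi_K)
qed

end


definition wt :: "nat \<Rightarrow> mono \<Rightarrow> nat" where
  "wt n M = (\<Sum>k\<le>n. M k) + 2 * M (Suc n)"

definition lowv :: "nat \<Rightarrow> nat \<Rightarrow> vec \<Rightarrow> bool" where
  "lowv n d \<phi> \<longleftrightarrow> (\<forall>M. wt n M < d \<longrightarrow> \<phi> M = 0)"

lemma sum_upd: "k \<le> n \<Longrightarrow> (\<Sum>i\<le>n. (M(k := y)) i) + M k = (\<Sum>i\<le>n. M i) + (y::nat)"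
  for n k :: nat
proof -
  assume k: "k \<le> n"
  have A: "(\<Sum>i\<le>n. (M(k := y)) i) = (M(k := y)) k + (\<Sum>i\<in>{..n} - {k}. (M(k := y)) i)"
    using k by (intro sum.remove) auto
  have B: "(\<Sum>i\<in>{..n} - {k}. (M(k := y)) i) = (\<Sum>i\<in>{..n} - {k}. M i)"
    by (intro sum.cong) auto
  have C: "(\<Sum>i\<le>n. M i) = M k + (\<Sum>i\<in>{..n} - {k}. M i)"
    using k by (intro sum.remove) auto
  have "(\<Sum>i\<le>n. (M(k := y)) i) = y + (\<Sum>i\<in>{..n} - {k}. M i)"
    using A B by simp
  then show ?thesis using C by simp
qed

lemma wt_upd: "k \<le> n \<Longrightarrow> wt n (M(k := y)) + M k = wt n M + y"
  using sum_upd[of k n M y] by (simp add: wt_def)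

lemma wt_updS: "wt n (M(Suc n := y)) + 2 * M (Suc n) = wt n M + 2 * y"
  by (simp add: wt_def)

lemma lowv_mono: "d' \<le> d \<Longrightarrow> lowv n d \<phi> \<Longrightarrow> lowv n d' \<phi>"
  by (auto simp: lowv_def)

lemma low_vmul: "k \<le> n \<Longrightarrow> lowv n d \<phi> \<Longrightarrow> lowv n (Suc d) (vmul k \<phi>)"
  unfolding lowv_def vmul_def
proof (intro allI impI)
  fix M assume k: "k \<le> n" and h: "\<forall>M. wt n M < d \<longrightarrow> \<phi> M = 0" and w: "wt n M < Suc d"
  show "(if M k = 0 then 0 else \<phi> (M(k := M k - 1))) = 0"
  proof (cases "M k = 0")
    case False
    have "wt n (M(k := M k - 1)) + M k = wt n M + (M k - 1)" by (rule wt_upd[OF k])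
    then have "wt n (M(k := M k - 1)) < d" using w False by simp
    then show ?thesis using h by simp
  qed simp
qed

lemma low_vmulS: "lowv n d \<phi> \<Longrightarrow> lowv n (Suc (Suc d)) (vmul (Suc n) \<phi>)"
  unfolding lowv_def vmul_def
proof (intro allI impI)
  fix M assume h: "\<forall>M. wt n M < d \<longrightarrow> \<phi> M = 0" and w: "wt n M < Suc (Suc d)"
  show "(if M (Suc n) = 0 then 0 else \<phi> (M(Suc n := M (Suc n) - 1))) = 0"
  proof (cases "M (Suc n) = 0")
    case False
    have "wt n (M(Suc n := M (Suc n) - 1)) + 2 * M (Suc n) = wt n M + 2 * (M (Suc n) - 1)" by (rule wt_updS)
    then have "wt n (M(Suc n := M (Suc n) - 1)) < d" using w False by simp
    then show ?thesis using h by simp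
  qed simp
qed

lemma low_vder: "k \<le> n \<Longrightarrow> lowv n d \<phi> \<Longrightarrow> lowv n (d - 1) (vder k \<phi>)"
  unfolding lowv_def vder_def
proof (intro allI impI)
  fix M assume k: "k \<le> n" and h: "\<forall>M. wt n M < d \<longrightarrow> \<phi> M = 0" and w: "wt n M < d - 1"
  have "wt n (M(k := Suc (M k))) + M k = wt n M + Suc (M k)" by (rule wt_upd[OF k])
  then have "wt n (M(k := Suc (M k))) < d" using w by simp
  then show "of_nat (Suc (M k)) * \<phi> (M(k := Suc (M k))) = 0" using h by simp
qed

lemma low_op: "lowv n d \<phi> \<Longrightarrow> lowv n (Suc d) (op n p q cc \<phi>)"
proof -
  assume h: "lowv n d \<phi>"
  have 1: "lowv n (Suc d) (vmul (Suc n) (vder k \<phi>))" if k: "k \<le> n" for k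
  proof -
    have "lowv n (d - 1) (vder k \<phi>)" by (rule low_vder[OF k h])
    then have "lowv n (Suc (Suc (d - 1))) (vmul (Suc n) (vder k \<phi>))" by (rule low_vmulS)
    then show ?thesis by (rule lowv_mono[rotated]) arith
  qed
  have 2: "\<And>k. k \<le> n \<Longrightarrow> lowv n (Suc d) (vmul k \<phi>)" using low_vmul h by blast
  have 3: "lowv n (Suc d) (vmul (Suc n) \<phi>)" using low_vmulS[OF h] by (rule lowv_mono[rotated]) simp
  show ?thesis
    unfolding lowv_def
  proof (intro allI impI)
    fix M assume w: "wt n M < Suc d"
    have "\<forall>k\<in>{..n}. p k * vmul (Suc n) (vder k \<phi>) M = 0" using 1 w by (auto simp: lowv_def)
    moreover have "\<forall>k\<in>{..n}. q k * vmul k \<phi> M = 0" using 2 w by (auto simp: lowv_def)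
    moreover have "vmul (Suc n) \<phi> M = 0" using 3 w by (auto simp: lowv_def)
    ultimately show "op n p q cc \<phi> M = 0" by (simp add: op_def sum.neutral)
  qed
qed

definition e0 :: vec where "e0 = (\<lambda>M. if M = (\<lambda>_. 0) then 1 else 0)"

context rep
begin

lemma low_Rw: "lowv n (length w) (Rw rho w e0)"
proof (induction w)
  case Nil
  then show ?case by (simp add: lowv_def)
next
  case (Cons a w)
  then show ?case by (simp add: rho_def low_op)
qed

lemma e0_K: "e0 \<in> Kset"
proof -
  have "vder l e0 = (\<lambda>M. 0)" for l
  proof (rule ext)
    fix M
    have "M(l := Suc (M l)) \<noteq> (\<lambda>_. 0)" by (metis fun_upd_same nat.distinct(1))
    then show "vder l e0 M = 0" by (simp add: vder_def e0_def)
  qed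
  then show ?thesis by (simp add: Kset_def Dv_def)
qed

definition Cst :: "mono \<Rightarrow> real" where
  "Cst Ms = (\<Sum>w\<in>{w. set w \<subseteq> {..<n} \<and> length w \<le> wt n Ms}. cmod (Rw rho w e0 Ms))"

lemma Lam_bound:
  assumes a: "a \<in> FA n"
  shows "cmod (Phi rho a e0 Ms) \<le> Cst Ms * l1 a"
proof -
  let ?Wd = "{w. set w \<subseteq> {..<n} \<and> length w \<le> wt n Ms}"
  have fW: "finite ?Wd" by (rule finite_lists_length_le) simp
  have each: "cmod (Rw rho w e0 Ms) \<le> Cst Ms" if w: "set w \<subseteq> {..<n}" for w
  proof (cases "length w \<le> wt n Ms")
    case True
    then have "w \<in> ?Wd" using w by simp
    then show ?thesis unfolding Cst_def by (rule member_le_sum[where f="\<lambda>w. cmod (Rw rho w e0 Ms)", OF _ _ fW]) auto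
  next
    case False
    then have "Rw rho w e0 Ms = 0" using low_Rw[of w] by (simp add: lowv_def)
    moreover have "0 \<le> Cst Ms" unfolding Cst_def by (rule sum_nonneg) auto
    ultimately show ?thesis by simp
  qed
  have "cmod (Phi rho a e0 Ms) = cmod (\<Sum>w\<in>supp a. a w * Rw rho w e0 Ms)" by (simp add: Phi_def)
  also have "\<dots> \<le> (\<Sum>w\<in>supp a. cmod (a w) * cmod (Rw rho w e0 Ms))"
    by (rule order_trans[OF norm_sum]) (simp add: norm_mult)
  also have "\<dots> \<le> (\<Sum>w\<in>supp a. cmod (a w) * Cst Ms)"
  proof (rule sum_mono)
    fix w assume "w \<in> supp a"
    then have "set w \<subseteq> {..<n}" using a by (auto simp: FA_iff supp_def)
    then show "cmod (a w) * cmod (Rw rho w e0 Ms) \<le> cmod (a w) * Cst Ms"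
      by (intro mult_left_mono each) auto
  qed
  also have "\<dots> = (\<Sum>w\<in>supp a. cmod (a w)) * Cst Ms" by (rule sum_distrib_right[symmetric])
  also have "\<dots> = Cst Ms * l1 a" by (simp add: l1_def)
  finally show ?thesis .
qed

lemma pn_pos:
  assumes a: "a \<in> FA n" and nz: "Phi rho a e0 Ms \<noteq> 0"
  shows "0 < pn c n a"
proof -
  have Cnn: "0 \<le> Cst Ms" unfolding Cst_def by (rule sum_nonneg) auto
  have "cmod (Phi rho a e0 Ms) / (Cst Ms + 1) \<le> pn c n a"
  proof (rule pn_ge)
    fix j assume j: "j \<in> ue_ideal c n"
    have jF: "j \<in> FA n" using j by (rule ideal_FA)
    have "Phi rho (fa_diff a j) e0 Ms = Phi rho a e0 Ms - Phi rho j e0 Ms"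
      using a jF by (simp add: Phi_diff FA_iff)
    also have "Phi rho j e0 = (\<lambda>M. 0)" using Phi_ideal[OF j] e0_K by simp
    finally have eq: "Phi rho (fa_diff a j) e0 Ms = Phi rho a e0 Ms" by simp
    have "cmod (Phi rho a e0 Ms) \<le> Cst Ms * l1 (fa_diff a j)"
      using Lam_bound[OF FA_diff[OF a jF], of Ms] eq by simp
    also have "\<dots> \<le> (Cst Ms + 1) * l1 (fa_diff a j)"
      by (intro mult_right_mono l1_nonneg) simp
    finally show "cmod (Phi rho a e0 Ms) / (Cst Ms + 1) \<le> l1 (fa_diff a j)"
      using Cnn by (simp add: field_simps)
  qed
  moreover have "0 < cmod (Phi rho a e0 Ms) / (Cst Ms + 1)" using nz Cnn by simp
  ultimately show ?thesis by linarith
qed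

end


definition mo :: "nat \<Rightarrow> nat \<Rightarrow> nat \<Rightarrow> mono" where
  "mo n m r = (\<lambda>k. if k = n then m else if k = Suc n then r else 0)"

definition ee :: "nat \<Rightarrow> nat \<Rightarrow> nat \<Rightarrow> vec" where
  "ee n m r = (\<lambda>M. if M = mo n m r then 1 else 0)"

lemma mo_eq_iff: "mo n m r = mo n m' r' \<longleftrightarrow> m = m' \<and> r = r'"
proof
  assume h: "mo n m r = mo n m' r'"
  have "m = m'" using fun_cong[OF h, of n] by (simp add: mo_def)
  moreover have "r = r'" using fun_cong[OF h, of "Suc n"] by (simp add: mo_def)
  ultimately show "m = m' \<and> r = r'" by simp
qed simp

lemma vmul_ee_x: "vmul n (ee n m r) = ee n (Suc m) r"
proof
  fix M
  have "(M n \<noteq> 0 \<and> M(n := M n - 1) = mo n m r) \<longleftrightarrow> M = mo n (Suc m) r"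
  proof
    assume h: "M n \<noteq> 0 \<and> M(n := M n - 1) = mo n m r"
    show "M = mo n (Suc m) r"
    proof
      fix k
      have hn: "M n \<noteq> 0" using h by simp
      have hk: "(M(n := M n - 1)) k = mo n m r k" using h by simp
      show "M k = mo n (Suc m) r k"
        using hn hk by (cases "k = n") (auto simp: mo_def split: if_splits)
    qed
  next
    assume h: "M = mo n (Suc m) r"
    then show "M n \<noteq> 0 \<and> M(n := M n - 1) = mo n m r" by (auto simp: mo_def fun_eq_iff)
  qed
  then show "vmul n (ee n m r) M = ee n (Suc m) r M"
    by (auto simp: vmul_def ee_def)
qed

lemma vmul_ee_s: "vmul (Suc n) (ee n m r) = ee n m (Suc r)"
proof
  fix M
  have "(M (Suc n) \<noteq> 0 \<and> M(Suc n := M (Suc n) - 1) = mo n m r) \<longleftrightarrow> M = mo n m (Suc r)"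
  proof
    assume h: "M (Suc n) \<noteq> 0 \<and> M(Suc n := M (Suc n) - 1) = mo n m r"
    show "M = mo n m (Suc r)"
    proof
      fix k
      have hn: "M (Suc n) \<noteq> 0" using h by simp
      have hk: "(M(Suc n := M (Suc n) - 1)) k = mo n m r k" using h by simp
      show "M k = mo n m (Suc r) k"
        using hn hk by (cases "k = Suc n") (auto simp: mo_def split: if_splits)
    qed
  next
    assume h: "M = mo n m (Suc r)"
    then show "M (Suc n) \<noteq> 0 \<and> M(Suc n := M (Suc n) - 1) = mo n m r" by (auto simp: mo_def fun_eq_iff)
  qed
  then show "vmul (Suc n) (ee n m r) M = ee n m (Suc r) M"
    by (auto simp: vmul_def ee_def)
qed

lemma vder_ee_x: "vder n (ee n m r) = (\<lambda>M. of_nat m * ee n (m - 1) r M)"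
proof
  fix M
  have "M(n := Suc (M n)) = mo n m r \<longleftrightarrow> m \<noteq> 0 \<and> M = mo n (m - 1) r"
  proof
    assume h: "M(n := Suc (M n)) = mo n m r"
    have mn: "Suc (M n) = m" using fun_cong[OF h, of n] by (simp add: mo_def)
    show "m \<noteq> 0 \<and> M = mo n (m - 1) r"
    proof
      show "m \<noteq> 0" using mn by auto
      show "M = mo n (m - 1) r"
      proof
        fix k
        show "M k = mo n (m - 1) r k"
          using mn fun_cong[OF h, of k] by (cases "k = n") (auto simp: mo_def)
      qed
    qed
  next
    assume h: "m \<noteq> 0 \<and> M = mo n (m - 1) r"
    then show "M(n := Suc (M n)) = mo n m r" by (auto simp: mo_def fun_eq_iff)
  qed
  then show "vder n (ee n m r) M = of_nat m * ee n (m - 1) r M"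
    by (auto simp: vder_def ee_def mo_def)
qed

lemma vder_ee_t: "k < n \<Longrightarrow> vder k (ee n m r) = (\<lambda>M. 0)"
proof
  fix M assume k: "k < n"
  have "M(k := Suc (M k)) \<noteq> mo n m r"
  proof
    assume "M(k := Suc (M k)) = mo n m r"
    then have "Suc (M k) = mo n m r k" by (metis fun_upd_same)
    then show False using k by (simp add: mo_def)
  qed
  then show "vder k (ee n m r) M = 0" by (simp add: vder_def ee_def)
qed

lemma op_ee:
  assumes q: "\<forall>k<n. q k = 0"
  shows "op n p q cc (ee n m r) = (\<lambda>M. p n * of_nat m * ee n (m - 1) (Suc r) M + q n * ee n (Suc m) r M + cc * ee n m (Suc r) M)"
proof
  fix M
  have 1: "(\<Sum>k\<le>n. p k * vmul (Suc n) (vder k (ee n m r)) M) = p n * of_nat m * ee n (m - 1) (Suc r) M"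
  proof -
    have "(\<Sum>k\<le>n. p k * vmul (Suc n) (vder k (ee n m r)) M) = (\<Sum>k<n. p k * vmul (Suc n) (vder k (ee n m r)) M) + p n * vmul (Suc n) (vder n (ee n m r)) M"
      by (simp add: lessThan_Suc_atMost[symmetric])
    also have "(\<Sum>k<n. p k * vmul (Suc n) (vder k (ee n m r)) M) = 0"
      by (intro sum.neutral) (simp add: vder_ee_t vmul_zero)
    also have "vmul (Suc n) (vder n (ee n m r)) M = of_nat m * ee n (m - 1) (Suc r) M"
      by (simp add: vder_ee_x vmul_scale vmul_ee_s)
    finally show ?thesis by simp
  qed
  have 2: "(\<Sum>k\<le>n. q k * vmul k (ee n m r) M) = q n * ee n (Suc m) r M"
  proof -
    have "(\<Sum>k\<le>n. q k * vmul k (ee n m r) M) = (\<Sum>k<n. q k * vmul k (ee n m r) M) + q n * vmul n (ee n m r) M"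
      by (simp add: lessThan_Suc_atMost[symmetric])
    also have "(\<Sum>k<n. q k * vmul k (ee n m r) M) = 0"
      by (intro sum.neutral) (simp add: q)
    finally show ?thesis by (simp add: vmul_ee_x)
  qed
  show "op n p q cc (ee n m r) M = p n * of_nat m * ee n (m - 1) (Suc r) M + q n * ee n (Suc m) r M + cc * ee n m (Suc r) M"
    unfolding op_def 1 2 by (simp add: vmul_ee_s)
qed

lemma lenf: "length (filter (\<lambda>i. i \<noteq> k) [0..<N]) = (if k < N then N - 1 else N)"
  by (induction N) auto

lemma prod_list_one: "(\<forall>x\<in>set xs. g x = (1::complex)) \<Longrightarrow> prod_list (map g xs) = 1"
  by (induction xs) auto

context rep
begin

lemma Bp_i0: "k < n \<Longrightarrow> Bp k i0 = 0"
  using Bskew[OF i0, of k] B10 Bdiag[OF i0] by (simp add: Bp_def)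

lemma Bp_j0: "k < n \<Longrightarrow> Bp k j0 = 0"
  using Bskew[OF j0, of k] B01 Bdiag[OF j0] by (simp add: Bp_def)

lemma rho_i0_ee: "rho i0 (ee n m r) = (\<lambda>M. - ee n (Suc m) r M + f i0 * ee n m (Suc r) M)"
proof -
  have q: "\<forall>k<n. qv i0 k = 0" by (simp add: qv_def Bp_i0)
  show ?thesis unfolding rho_def op_ee[OF q]
    by (simp add: pv_def qv_def Bdiag[OF i0] B10)
qed

lemma rho_j0_ee: "rho j0 (ee n m r) = (\<lambda>M. of_nat m * ee n (m - 1) (Suc r) M + f j0 * ee n m (Suc r) M)"
proof -
  have q: "\<forall>k<n. qv j0 k = 0" by (simp add: qv_def Bp_j0)
  show ?thesis unfolding rho_def op_ee[OF q]
    by (simp add: pv_def qv_def Bdiag[OF j0] B01)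
qed

definition zS :: fa where
  "zS = fa_diff (fa_mult (fa_gen i0) (fa_gen j0)) (fa_mult (fa_gen j0) (fa_gen i0))"

lemma zS_FA: "zS \<in> FA n"
  unfolding zS_def using i0 j0 by (intro FA_diff FA_mult FA_gen)

lemma fsupp: "x \<in> FA n \<Longrightarrow> finite (supp x)" by (simp add: FA_iff)

lemma Phi_zS: "Phi rho zS \<phi> = vmul (Suc n) \<phi>"
proof -
  have g: "\<And>k. finite (supp (fa_gen k))" by (simp add: supp_def fa_gen_def)
  have m1: "finite (supp (fa_mult (fa_gen i0) (fa_gen j0)))"
    using FA_mult[OF FA_gen[OF i0] FA_gen[OF j0]] by (simp add: FA_iff)
  have m2: "finite (supp (fa_mult (fa_gen j0) (fa_gen i0)))"
    using FA_mult[OF FA_gen[OF j0] FA_gen[OF i0]] by (simp add: FA_iff)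
  have RC: "rho i0 (rho j0 \<phi>) = (\<lambda>M. rho j0 (rho i0 \<phi>) M + B i0 j0 * vmul (Suc n) \<phi> M)"
    by (rule rho_comm[OF i0 j0])
  show ?thesis unfolding zS_def
    by (simp add: Phi_diff m1 m2 Phi_mult g lin_rho Phi_gen RC B01)
qed

definition xE :: fa where "xE = fa_scale (-1) (fa_diff (fa_gen i0) (fa_scale (f i0) zS))"
definition yE :: fa where "yE = fa_diff (fa_gen j0) (fa_scale (f j0) zS)"

lemma xE_FA: "xE \<in> FA n" unfolding xE_def using i0 by (intro FA_scale FA_diff FA_gen zS_FA)
lemma yE_FA: "yE \<in> FA n" unfolding yE_def using j0 by (intro FA_scale FA_diff FA_gen zS_FA)

lemma Phi_xE: "Phi rho xE (ee n m r) = ee n (Suc m) r"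
proof -
  have "Phi rho xE (ee n m r) = (\<lambda>M. - (rho i0 (ee n m r) M - f i0 * vmul (Suc n) (ee n m r) M))"
    unfolding xE_def using zS_FA i0
    by (simp add: Phi_scale Phi_diff fsupp FA_scale FA_diff FA_gen Phi_gen Phi_zS)
  also have "\<dots> = ee n (Suc m) r" by (simp add: rho_i0_ee vmul_ee_s)
  finally show ?thesis .
qed

lemma Phi_yE: "Phi rho yE (ee n m r) = (\<lambda>M. of_nat m * ee n (m - 1) (Suc r) M)"
proof -
  have "Phi rho yE (ee n m r) = (\<lambda>M. rho j0 (ee n m r) M - f j0 * vmul (Suc n) (ee n m r) M)"
    unfolding yE_def using zS_FA j0
    by (simp add: Phi_scale Phi_diff fsupp FA_scale FA_diff FA_gen Phi_gen Phi_zS)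
  also have "\<dots> = (\<lambda>M. of_nat m * ee n (m - 1) (Suc r) M)" by (simp add: rho_j0_ee vmul_ee_s)
  finally show ?thesis .
qed

definition eE :: fa where "eE = fa_mult xE yE"

lemma eE_FA: "eE \<in> FA n" unfolding eE_def by (intro FA_mult xE_FA yE_FA)

lemma Phi_eE: "Phi rho eE (ee n m r) = (\<lambda>M. of_nat m * ee n m (Suc r) M)"
proof -
  have "Phi rho eE (ee n m r) = Phi rho xE (\<lambda>M. of_nat m * ee n (m - 1) (Suc r) M)"
    unfolding eE_def using xE_FA yE_FA by (simp add: Phi_mult fsupp lin_rho Phi_yE)
  also have "\<dots> = (\<lambda>M. of_nat m * Phi rho xE (ee n (m - 1) (Suc r)) M)"
    by (rule linD2[OF lin_Phi[OF fsupp[OF xE_FA] lin_rho]])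
  also have "\<dots> = (\<lambda>M. of_nat m * ee n m (Suc r) M)"
    by (cases m) (simp_all add: Phi_xE)
  finally show ?thesis .
qed

definition fsc :: "nat \<Rightarrow> nat \<Rightarrow> fa" where
  "fsc k i = fa_scale (1 / (of_nat k - of_nat i)) (fa_diff eE (fa_scale (of_nat i) zS))"

lemma fsc_FA: "fsc k i \<in> FA n" unfolding fsc_def by (intro FA_scale FA_diff eE_FA zS_FA)

lemma Phi_fsc: "Phi rho (fsc k i) (ee n m r) = (\<lambda>M. ((of_nat m - of_nat i) / (of_nat k - of_nat i)) * ee n m (Suc r) M)"
proof -
  have d: "fa_diff eE (fa_scale (of_nat i) zS) \<in> FA n" by (intro FA_diff FA_scale eE_FA zS_FA)
  show ?thesis unfolding fsc_def using eE_FA zS_FA d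
    by (simp add: Phi_scale Phi_diff fsupp FA_scale Phi_eE Phi_zS vmul_ee_s times_divide_eq_left left_diff_distrib)
qed

lemma Phi_prod_map:
  assumes FA: "\<And>i. F i \<in> FA n"
    and ph: "\<And>i m r. Phi rho (F i) (ee n m r) = (\<lambda>M. G i m * ee n m (Suc r) M)"
  shows "Phi rho (fa_prod (map F is)) (ee n m r) = (\<lambda>M. prod_list (map (\<lambda>i. G i m) is) * ee n m (r + length is) M)"
proof (induction "is")
  case Nil
  then show ?case by (simp add: Phi_one)
next
  case (Cons i "is")
  have fp: "fa_prod (map F is) \<in> FA n" using FA by (intro FA_prod) auto
  have "Phi rho (fa_prod (map F (i # is))) (ee n m r) = Phi rho (F i) (Phi rho (fa_prod (map F is)) (ee n m r))"
    using FA fp by (simp add: Phi_mult fsupp lin_rho)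
  also have "\<dots> = (\<lambda>M. prod_list (map (\<lambda>i. G i m) is) * Phi rho (F i) (ee n m (r + length is)) M)"
    unfolding Cons.IH by (rule linD2[OF lin_Phi[OF fsupp[OF FA] lin_rho]])
  also have "\<dots> = (\<lambda>M. prod_list (map (\<lambda>i. G i m) (i # is)) * ee n m (r + length (i # is)) M)"
    by (simp add: ph algebra_simps)
  finally show ?case .
qed

definition sel :: "nat \<Rightarrow> nat \<Rightarrow> fa" where
  "sel L k = fa_prod (map (fsc k) (filter (\<lambda>i. i \<noteq> k) [0..<Suc L]))"

lemma sel_FA: "sel L k \<in> FA n" unfolding sel_def by (intro FA_prod) (auto intro: fsc_FA)

lemma Phi_sel:
  assumes m: "m \<le> L" and k: "k \<le> L"
  shows "Phi rho (sel L k) (ee n m r) = (\<lambda>M. (if m = k then 1 else 0) * ee n m (r + L) M)"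
proof -
  let ?is = "filter (\<lambda>i. i \<noteq> k) [0..<Suc L]"
  have len: "length ?is = L" using k by (simp add: lenf)
  have "Phi rho (sel L k) (ee n m r) = (\<lambda>M. prod_list (map (\<lambda>i. (of_nat m - of_nat i) / (of_nat k - of_nat i)) ?is) * ee n m (r + length ?is) M)"
    unfolding sel_def by (rule Phi_prod_map[OF fsc_FA Phi_fsc])
  also have "prod_list (map (\<lambda>i. (of_nat m - of_nat i) / (of_nat k - of_nat i)) ?is) = (if m = k then 1 else (0::complex))"
  proof (cases "m = k")
    case True
    then show ?thesis by (auto intro!: prod_list_one)
  next
    case False
    have "m \<in> set ?is" using m False by auto
    then have "(0::complex) \<in> set (map (\<lambda>i. (of_nat m - of_nat i) / (of_nat k - of_nat i)) ?is)"
      unfolding set_map by (rule image_eqI[rotated]) simp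
    then show ?thesis using False by (simp add: prod_list_zero_iff)
  qed
  finally show ?thesis using len by simp
qed

end


context rep
begin

definition Kj :: "nat list \<Rightarrow> nat \<Rightarrow> nat set" where
  "Kj v j = {k. k < length v \<and> rev v ! k = j}"

definition bsum :: "nat list \<Rightarrow> nat \<Rightarrow> fa" where
  "bsum v j = (\<lambda>w. \<Sum>k\<in>Kj v j. 1 * sel (length v) k w)"

definition bb :: "nat list \<Rightarrow> nat \<Rightarrow> fa" where
  "bb v j = fa_mult xE (bsum v j)"

lemma fin_Kj: "finite (Kj v j)" unfolding Kj_def by simp

lemma bsum_FA: "bsum v j \<in> FA n"
  unfolding bsum_def by (rule FA_sum[OF fin_Kj]) (auto intro: sel_FA)

lemma bb_FA: "bb v j \<in> FA n"
  unfolding bb_def by (intro FA_mult xE_FA bsum_FA)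

lemma Phi_bsum:
  assumes m: "m \<le> length v"
  shows "Phi rho (bsum v j) (ee n m r) = (\<lambda>M. (if m \<in> Kj v j then 1 else 0) * ee n m (r + length v) M)"
proof -
  have "Phi rho (bsum v j) (ee n m r) = (\<lambda>M. \<Sum>k\<in>Kj v j. 1 * Phi rho (sel (length v) k) (ee n m r) M)"
    unfolding bsum_def by (rule Phi_sum[OF fin_Kj]) (rule fsupp[OF sel_FA])
  also have "\<dots> = (\<lambda>M. \<Sum>k\<in>Kj v j. (if m = k then ee n m (r + length v) M else 0))"
  proof (intro ext sum.cong refl)
    fix M k assume "k \<in> Kj v j"
    then have "k \<le> length v" by (simp add: Kj_def)
    then show "1 * Phi rho (sel (length v) k) (ee n m r) M = (if m = k then ee n m (r + length v) M else 0)"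
      using m by (simp add: Phi_sel)
  qed
  also have "\<dots> = (\<lambda>M. (if m \<in> Kj v j then 1 else 0) * ee n m (r + length v) M)"
    using fin_Kj by (simp add: sum.delta)
  finally show ?thesis .
qed

lemma Phi_bb:
  assumes m: "m \<le> length v"
  shows "Phi rho (bb v j) (ee n m r) = (\<lambda>M. (if m < length v \<and> rev v ! m = j then 1 else 0) * ee n (Suc m) (r + length v) M)"
proof -
  have "Phi rho (bb v j) (ee n m r) = Phi rho xE (\<lambda>M. (if m \<in> Kj v j then 1 else 0) * ee n m (r + length v) M)"
    unfolding bb_def using xE_FA bsum_FA by (simp add: Phi_mult fsupp lin_rho Phi_bsum[OF m])
  also have "\<dots> = (\<lambda>M. (if m \<in> Kj v j then 1 else 0) * Phi rho xE (ee n m (r + length v)) M)"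
    by (rule linD2[OF lin_Phi[OF fsupp[OF xE_FA] lin_rho]])
  also have "\<dots> = (\<lambda>M. (if m < length v \<and> rev v ! m = j then 1 else 0) * ee n (Suc m) (r + length v) M)"
    by (simp add: Phi_xE Kj_def)
  finally show ?thesis .
qed

lemma chain:
  assumes m: "m \<le> length v"
  shows "Phi rho (fa_prod (map (bb v) u)) (ee n m r) =
    (\<lambda>M. (if m + length u \<le> length v \<and> take (length u) (drop m (rev v)) = rev u then 1 else 0)
          * ee n (m + length u) (r + length u * length v) M)"
proof (induction u)
  case Nil
  then show ?case using m by (simp add: Phi_one)
next
  case (Cons a u)
  let ?L = "length v"
  let ?c1 = "m + length u \<le> ?L \<and> take (length u) (drop m (rev v)) = rev u"
  have fp: "fa_prod (map (bb v) u) \<in> FA n" by (intro FA_prod) (auto intro: bb_FA)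
  have "Phi rho (fa_prod (map (bb v) (a # u))) (ee n m r) = Phi rho (bb v a) (Phi rho (fa_prod (map (bb v) u)) (ee n m r))"
    using fp bb_FA by (simp add: Phi_mult fsupp lin_rho)
  also have "\<dots> = (\<lambda>M. (if ?c1 then 1 else 0) * Phi rho (bb v a) (ee n (m + length u) (r + length u * ?L)) M)"
    unfolding Cons.IH by (rule linD2[OF lin_Phi[OF fsupp[OF bb_FA] lin_rho]])
  also have "\<dots> = (\<lambda>M. (if m + length (a # u) \<le> ?L \<and> take (length (a # u)) (drop m (rev v)) = rev (a # u) then 1 else 0)
          * ee n (m + length (a # u)) (r + length (a # u) * ?L) M)"
  proof (cases ?c1)
    case True
    then have le: "m + length u \<le> ?L" and tk: "take (length u) (drop m (rev v)) = rev u" by auto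
    have eq: "(m + length u < ?L \<and> rev v ! (m + length u) = a) \<longleftrightarrow>
        (m + length (a # u) \<le> ?L \<and> take (length (a # u)) (drop m (rev v)) = rev (a # u))"
    proof (cases "m + length u < ?L")
      case True
      have lt: "length u < length (drop m (rev v))" using True by simp
      have "take (length (a # u)) (drop m (rev v)) = take (length u) (drop m (rev v)) @ [drop m (rev v) ! length u]"
        using lt by (simp add: take_Suc_conv_app_nth)
      also have "\<dots> = rev u @ [rev v ! (m + length u)]" using tk True by (simp add: nth_drop)
      finally show ?thesis using True by auto
    next
      case False
      then show ?thesis by simp
    qed
    have "Phi rho (bb v a) (ee n (m + length u) (r + length u * ?L)) =
      (\<lambda>M. (if m + length u < ?L \<and> rev v ! (m + length u) = a then 1 else 0) * ee n (Suc (m + length u)) (r + length u * ?L + ?L) M)"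
      using le by (rule Phi_bb)
    then show ?thesis using True eq by (simp add: algebra_simps)
  next
    case False
    have nc2: "\<not> (m + length (a # u) \<le> ?L \<and> take (length (a # u)) (drop m (rev v)) = rev (a # u))"
    proof
      assume h: "m + length (a # u) \<le> ?L \<and> take (length (a # u)) (drop m (rev v)) = rev (a # u)"
      then have "take (length u) (take (length (a # u)) (drop m (rev v))) = take (length u) (rev (a # u))" by simp
      then have "take (length u) (drop m (rev v)) = rev u" by (simp add: min_def)
      then show False using False h by simp
    qed
    show ?thesis
      apply (rule ext)
      apply (subst if_not_P[OF False])
      apply (subst if_not_P[OF nc2])
      apply simp
      done
  qed
  finally show ?case .
qed

lemma e0_ee: "e0 = ee n 0 0"
  by (rule ext) (simp add: e0_def ee_def mo_def fun_eq_iff)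

lemma Lam_word: "Phi rho (fa_prod (map (bb v) u)) e0 (mo n (length v) (length v * length v)) = (if u = v then 1 else 0)"
proof -
  have "Phi rho (fa_prod (map (bb v) u)) e0 (mo n (length v) (length v * length v)) =
     (if length u \<le> length v \<and> take (length u) (rev v) = rev u then 1 else 0) * ee n (length u) (length u * length v) (mo n (length v) (length v * length v))"
    unfolding e0_ee using chain[of 0 v u 0] by simp
  also have "\<dots> = (if u = v then 1 else 0)"
  proof (cases "length u = length v")
    case True
    then have "take (length u) (rev v) = rev v" by simp
    then show ?thesis using True by (auto simp: ee_def mo_eq_iff)
  next
    case False
    then show ?thesis by (auto simp: ee_def mo_eq_iff)
  qed
  finally show ?thesis .
qed

end

theorem proposition4:
  fixes c :: "nat \<Rightarrow> nat \<Rightarrow> nat \<Rightarrow> complex" and n :: nat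
  assumes "is_lie_algebra c n"
    and "lie_nilpotent c n"
    and "\<not> lie_abelian c n"
  shows "\<exists>p. ue_prenorm c n p \<and> \<not> completion_PI n p"
proof -
  obtain f i0 j0 where ij: "i0 < n" "j0 < n" and one: "(\<Sum>k<n. c i0 j0 k * f k) = 1"
    and TT: "\<forall>a i j. a < n \<longrightarrow> i < n \<longrightarrow> j < n \<longrightarrow> (\<Sum>y<n. c i j y * (\<Sum>m<n. c a y m * f m)) = 0"
    using exists_f[OF assms(2,3)] by blast
  interpret R: rep c n f i0 j0
  proof
    show "\<And>i j k. i < n \<Longrightarrow> j < n \<Longrightarrow> k < n \<Longrightarrow> c j i k = - c i j k"
      using skew[OF assms(1)] by blast
  qed (use TT one ij in auto)
  have notPI: "\<not> completion_PI n (pn c n)"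
  proof
    assume "completion_PI n (pn c n)"
    then obtain P where fin: "finite {v. P v \<noteq> 0}" and nz: "P \<noteq> (\<lambda>_. 0)"
      and lim: "\<forall>s :: nat \<Rightarrow> nat \<Rightarrow> fa. (\<forall>i. p_cauchy n (pn c n) (s i)) \<longrightarrow>
            ((\<lambda>k. pn c n (nc_eval P (\<lambda>i. s i k))) \<longlonglongrightarrow> 0)"
      unfolding completion_PI_def by blast
    have ne: "{v. P v \<noteq> 0} \<noteq> {}" using nz by auto
    define L where "L = Max (length ` {v. P v \<noteq> 0})"
    have "L \<in> length ` {v. P v \<noteq> 0}" unfolding L_def using fin ne by (intro Max_in) auto
    then obtain v where v: "P v \<noteq> 0" "length v = L" by auto
    define b where "b = R.bb v"
    have bF: "\<And>j. b j \<in> FA n" unfolding b_def by (rule R.bb_FA)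
    have cau: "\<forall>i. p_cauchy n (pn c n) (\<lambda>k. b i)"
    proof
      fix i
      have "fa_diff (b i) (b i) = (\<lambda>_. 0)" by (simp add: fa_diff_def)
      then show "p_cauchy n (pn c n) (\<lambda>k. b i)" using bF by (simp add: p_cauchy_def pn_zero)
    qed
    have "(\<lambda>k. pn c n (nc_eval P b)) \<longlonglongrightarrow> 0"
      using lim[rule_format, of "\<lambda>i k. b i"] cau by simp
    then have z: "pn c n (nc_eval P b) = 0" by (simp add: LIMSEQ_const_iff)
    have pF: "\<And>u. fa_prod (map b u) \<in> FA n" by (intro FA_prod) (auto intro: bF)
    have eF: "nc_eval P b \<in> FA n" unfolding nc_eval_def by (rule FA_sum[OF fin]) (auto intro: pF)
    let ?Ms = "mo n (length v) (length v * length v)"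
    have "Phi R.rho (nc_eval P b) e0 ?Ms = (\<Sum>u\<in>{v. P v \<noteq> 0}. P u * Phi R.rho (fa_prod (map b u)) e0 ?Ms)"
      unfolding nc_eval_def using Phi_sum[OF fin, of "\<lambda>u. fa_prod (map b u)" R.rho P e0] pF R.fsupp
      by (simp add: FA_iff)
    also have "\<dots> = (\<Sum>u\<in>{v. P v \<noteq> 0}. if u = v then P u else 0)"
      unfolding b_def by (intro sum.cong refl) (simp add: R.Lam_word)
    also have "\<dots> = P v" using fin v by (simp add: sum.delta)
    finally have "Phi R.rho (nc_eval P b) e0 ?Ms \<noteq> 0" using v by simp
    then have "0 < pn c n (nc_eval P b)" by (rule R.pn_pos[OF eF])
    then show False using z by simp
  qed
  show ?thesis using pn_prenorm notPI by blast
qed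


end
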